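(* Let $a=(a_i)_{i\in\mathbb Z}$ be a sequence of pairwise distinct complex numbers. Let $f\in\Lambda$ have degree $\le n$ and write $f=\sum_{\lambda:\,|\lambda|\le n}c(\lambda)s_{\lambda;a}$. Then the coefficients are determined recursively in $|\lambda|$ by $c(\varnothing)=f(0;0)$ and $$c(\lambda)=\frac{f(x(\lambda);y(\lambda))-\sum_{\mu\subset\lambda,\ \mu\ne\lambda}c(\mu)\,s_{\mu;a}(x(\lambda);y(\lambda))}{s_{\lambda;a}(x(\lambda);y(\lambda))}.$$
   Context: $\Lambda$ is the algebra of symmetric functions over $\mathbb C$ (graded by degree) with complete homogeneous $h_k$, elementary $e_k$, power sums $\mathbf p_k$. For a sequence $a$ define $h_{k;a}=\sum_{i=1}^k(-1)^{k-i}e_{k-i}(a_1,\dots,a_{k-1})h_i$ ($k\ge1$), $h_{0;a}=1$, $h_{k;a}=0$ ($k<0$); $(\tau^ra)_i=a_{i+r}$; $s_{\mu;a}=\det[h_{\mu_i-i+j;\,\tau^{1-j}a}]_{i,j=1}^N$ for any $N\ge\ell(\mu)$; $s_{\mu;a}$ equals the Schur function $s_\mu$ plus lower-degree terms, and these functions form a basis of $\Lambda$. Dual sequence: $\widehat a_i=-a_{1-i}$. Each $f\in\Lambda$ is evaluated at $(x;y)\in\mathbb C^d\times\mathbb C^d$ via $\mathbf p_k\mapsto\sum_ix_i^k+(-1)^{k-1}\sum_jy_j^k$. For a nonempty diagram $\lambda=(p_1,\dots,p_d\mid q_1,\dots,q_d)$ in Frobenius notation ($p_i=\lambda_i-i$,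 $q_i=\lambda'_i-i$, $d$ the number of diagonal boxes), $(x(\lambda);y(\lambda))=(a_{p_1+1},\dots,a_{p_d+1};\widehat a_{q_1+1},\dots,\widehat a_{q_d+1})$; and $(x(\varnothing);y(\varnothing))=(0;0)$. *)

theory Defs
  imports "HOL-Library.Poly_Mapping" "Jordan_Normal_Form.Determinant"
begin

text \<open>The algebra Lambda of symmetric functions over the complex numbers, modelled as the
free polynomial algebra in the power sums p_1, p_2, ... (over a field of characteristic 0
these are algebraically independent generators). A monomial is a finitely supported
exponent vector; variable index i stands for p_(i+1).\<close>

type_synonym symfun = "(nat \<Rightarrow>\<^sub>0 nat) \<Rightarrow>\<^sub>0 complex"

definition pvar :: "nat \<Rightarrow> symfun" where
  "pvar k = Poly_Mapping.single (Poly_Mapping.single (k - 1) 1) 1"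

definition constL :: "complex \<Rightarrow> symfun" where
  "constL c = Poly_Mapping.single 0 c"

definition wdeg :: "(nat \<Rightarrow>\<^sub>0 nat) \<Rightarrow> nat" where
  "wdeg m = (\<Sum>i\<in>Poly_Mapping.keys m. (i + 1) * Poly_Mapping.lookup m i)"

text \<open>Complete homogeneous symmetric functions via Newton's identity
  k h_k = sum_(i=1..k) p_i h_(k-i), h_0 = 1.\<close>
fun hlist :: "nat \<Rightarrow> symfun list" where
  "hlist 0 = [1]"
| "hlist (Suc k) = hlist k @
     [constL (1 / of_nat (Suc k)) * (\<Sum>i=1..Suc k. pvar i * (hlist k ! (Suc k - i)))]"

definition hcomp :: "nat \<Rightarrow> symfun" where
  "hcomp k = hlist k ! k"

definition esym :: "nat \<Rightarrow> complex list \<Rightarrow> complex" where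
  "esym j xs = (\<Sum>S\<in>{S. S \<subseteq> {..<length xs} \<and> card S = j}. \<Prod>i\<in>S. xs ! i)"

definition shiftseq :: "int \<Rightarrow> (int \<Rightarrow> complex) \<Rightarrow> int \<Rightarrow> complex" where
  "shiftseq r a = (\<lambda>i. a (i + r))"

definition hshift :: "int \<Rightarrow> (int \<Rightarrow> complex) \<Rightarrow> symfun" where
  "hshift k a = (if k < 0 then 0 else if k = 0 then 1 else
     (\<Sum>i=1..nat k. constL ((-1) ^ (nat k - i) *
         esym (nat k - i) (map (\<lambda>m. a (int m)) [1..<nat k])) * hcomp i))"

definition is_partition :: "nat list \<Rightarrow> bool" where
  "is_partition l \<longleftrightarrow> sorted_wrt (\<ge>) l \<and> (\<forall>x\<in>set l. 0 < x)"

definition subdiag :: "nat list \<Rightarrow> nat list \<Rightarrow> bool" where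
  "subdiag mu l \<longleftrightarrow> length mu \<le> length l \<and> (\<forall>i<length mu. mu ! i \<le> l ! i)"

text \<open>s_{mu;a}, as the N x N determinant with N = length mu (0-indexed rows/columns).\<close>
definition schurA :: "nat list \<Rightarrow> (int \<Rightarrow> complex) \<Rightarrow> symfun" where
  "schurA mu a = det (mat (length mu) (length mu)
     (\<lambda>(i, j). hshift (int (mu ! i) - int i + int j) (shiftseq (- int j) a)))"

text \<open>Conjugate partition lambda'_i (1-indexed i).\<close>
definition conjp :: "nat list \<Rightarrow> nat \<Rightarrow> nat" where
  "conjp l i = length (filter (\<lambda>p. i \<le> p) l)"

definition dlen :: "nat list \<Rightarrow> nat" where
  "dlen l = length (filter (\<lambda>i. i + 1 \<le> l ! i) [0..<length l])"

text \<open>x(lambda) = (a_{p_1+1},...,a_{p_d+1}), p_i = lambda_i - i.\<close>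
definition xpt :: "(int \<Rightarrow> complex) \<Rightarrow> nat list \<Rightarrow> complex list" where
  "xpt a l = map (\<lambda>i. a (int (l ! i) - int (i + 1) + 1)) [0..<dlen l]"

text \<open>y(lambda) = (hat a_{q_1+1},...), q_i = lambda'_i - i, hat a_j = - a_{1-j}.\<close>
definition ypt :: "(int \<Rightarrow> complex) \<Rightarrow> nat list \<Rightarrow> complex list" where
  "ypt a l = map (\<lambda>i. - a (1 - (int (conjp l (i + 1)) - int (i + 1) + 1))) [0..<dlen l]"

definition psum :: "complex list \<Rightarrow> complex list \<Rightarrow> nat \<Rightarrow> complex" where
  "psum xs ys k = (\<Sum>x\<leftarrow>xs. x ^ k) + (-1) ^ (k - 1) * (\<Sum>y\<leftarrow>ys. y ^ k)"

definition evalL :: "symfun \<Rightarrow> complex list \<Rightarrow> complex list \<Rightarrow> complex" where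
  "evalL f xs ys = (\<Sum>m\<in>Poly_Mapping.keys f. Poly_Mapping.lookup f m * (\<Prod>i\<in>Poly_Mapping.keys m. psum xs ys (i + 1) ^ Poly_Mapping.lookup m i))"

end

theory Submission
  imports Defs "HOL-Computational_Algebra.Formal_Power_Series"
begin


definition mon :: "complex list \<Rightarrow> complex list \<Rightarrow> (nat \<Rightarrow>\<^sub>0 nat) \<Rightarrow> complex" where
  "mon xs ys m = (\<Prod>i\<in>Poly_Mapping.keys m. psum xs ys (i + 1) ^ Poly_Mapping.lookup m i)"

lemma mon_superset:
  assumes "finite K" "Poly_Mapping.keys m \<subseteq> K"
  shows "mon xs ys m = (\<Prod>i\<in>K. psum xs ys (i + 1) ^ Poly_Mapping.lookup m i)"
  unfolding mon_def
  apply (rule prod.mono_neutral_left)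
  using assms apply (auto simp: in_keys_iff)
  done
lemma mon_add: "mon xs ys (m + m') = mon xs ys m * mon xs ys m'"
proof -
  let ?K = "Poly_Mapping.keys m \<union> Poly_Mapping.keys m'"
  have f: "finite ?K" by simp
  have "mon xs ys (m + m') = (\<Prod>i\<in>?K. psum xs ys (i + 1) ^ Poly_Mapping.lookup (m + m') i)"
    by (rule mon_superset[OF f keys_add])
  also have "\<dots> = (\<Prod>i\<in>?K. psum xs ys (i + 1) ^ Poly_Mapping.lookup m i * psum xs ys (i + 1) ^ Poly_Mapping.lookup m' i)"
    by (simp only: lookup_add power_add)
  also have "\<dots> = (\<Prod>i\<in>?K. psum xs ys (i + 1) ^ Poly_Mapping.lookup m i) * (\<Prod>i\<in>?K. psum xs ys (i + 1) ^ Poly_Mapping.lookup m' i)"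
    by (rule prod.distrib)
  also have "\<dots> = mon xs ys m * mon xs ys m'"
    using mon_superset[OF f, of m xs ys] mon_superset[OF f, of m' xs ys] by simp
  finally show ?thesis .
qed

lemma evalL_mon: "evalL f xs ys = (\<Sum>m\<in>Poly_Mapping.keys f. Poly_Mapping.lookup f m * mon xs ys m)"
  unfolding evalL_def mon_def ..

lemma evalL_superset:
  assumes "finite K" "Poly_Mapping.keys f \<subseteq> K"
  shows "evalL f xs ys = (\<Sum>m\<in>K. Poly_Mapping.lookup f m * mon xs ys m)"
  unfolding evalL_mon
  by (rule sum.mono_neutral_left) (use assms in \<open>auto simp: in_keys_iff\<close>)

lemma evalL_add: "evalL (f + g) xs ys = evalL f xs ys + evalL g xs ys"
proof -
  let ?K = "Poly_Mapping.keys f \<union> Poly_Mapping.keys g"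
  have f: "finite ?K" by simp
  show ?thesis
    using keys_add[of f g]
    by (simp add: evalL_superset[OF f] lookup_add sum.distrib algebra_simps)
qed

lemma evalL_zero[simp]: "evalL 0 xs ys = 0"
  by (simp add: evalL_def)

lemma evalL_sum: "evalL (\<Sum>i\<in>I. F i) xs ys = (\<Sum>i\<in>I. evalL (F i) xs ys)"
  by (induction I rule: infinite_finite_induct) (auto simp: evalL_add)

lemma evalL_single: "evalL (Poly_Mapping.single m c) xs ys = c * mon xs ys m"
  by (simp add: evalL_mon)

lemma pm_decomp: "f = (\<Sum>m\<in>Poly_Mapping.keys f. Poly_Mapping.single m (Poly_Mapping.lookup f m))"
proof (rule poly_mapping_eqI)
  fix k
  show "Poly_Mapping.lookup f k = Poly_Mapping.lookup (\<Sum>m\<in>Poly_Mapping.keys f. Poly_Mapping.single m (Poly_Mapping.lookup f m)) k"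
  proof (cases "k \<in> Poly_Mapping.keys f")
    case True
    then show ?thesis
      unfolding lookup_sum lookup_single
      by (subst sum.remove[OF _ True]) (auto simp: when_def intro!: sum.neutral)
  next
    case False
    then show ?thesis
      unfolding lookup_sum lookup_single
      by (auto simp: when_def in_keys_iff intro!: sum.neutral)
  qed
qed

lemma evalL_mult: "evalL (f * g) xs ys = evalL f xs ys * evalL g xs ys"
proof -
  have "f * g = (\<Sum>m\<in>Poly_Mapping.keys f. \<Sum>m'\<in>Poly_Mapping.keys g.
      Poly_Mapping.single (m + m') (Poly_Mapping.lookup f m * Poly_Mapping.lookup g m'))"
    apply (subst pm_decomp[of f], subst pm_decomp[of g])
    by (simp add: sum_distrib_left sum_distrib_right mult_single sum.swap[of _ "Poly_Mapping.keys g"])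
  hence "evalL (f * g) xs ys = (\<Sum>m\<in>Poly_Mapping.keys f. \<Sum>m'\<in>Poly_Mapping.keys g.
      Poly_Mapping.lookup f m * Poly_Mapping.lookup g m' * (mon xs ys m * mon xs ys m'))"
    by (simp add: evalL_sum evalL_single mon_add)
  also have "\<dots> = evalL f xs ys * evalL g xs ys"
    by (simp add: evalL_mon sum_product algebra_simps)
  finally show ?thesis .
qed

lemma evalL_one[simp]: "evalL 1 xs ys = 1"
  by (simp add: evalL_mon mon_def)

lemma evalL_constL[simp]: "evalL (constL c) xs ys = c"
  by (simp add: constL_def evalL_single mon_def)

lemma evalL_pvar: "k \<ge> 1 \<Longrightarrow> evalL (pvar k) xs ys = psum xs ys k"
  by (simp add: pvar_def evalL_single mon_def)

interpretation evhom: comm_ring_hom "\<lambda>f. evalL f xs ys"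
  by unfold_locales (auto simp: evalL_add evalL_mult)

lemma evalL_det: "evalL (det A) xs ys = det (map_mat (\<lambda>f. evalL f xs ys) A)"
  by simp


no_notation vec_index (infixl \<open>$\<close> 100)
notation fps_nth (infixl \<open>$\<close> 75)

section \<open>Elementary symmetric polynomials\<close>

lemma fin_sub_lt: "S \<subseteq> {..<n::nat} \<Longrightarrow> finite S"
  using finite_subset by blast

lemma esym_0[simp]: "esym 0 xs = 1"
proof -
  have E: "{S. S \<subseteq> {..<length xs} \<and> card S = 0} = {{}}"
  proof (intro equalityI subsetI)
    fix S assume "S \<in> {S. S \<subseteq> {..<length xs} \<and> card S = 0}"
    then have "S \<subseteq> {..<length xs}" "card S = 0" by auto
    then show "S \<in> {{}}" using fin_sub_lt by auto
  qed auto
  show ?thesis unfolding esym_def E by simp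
qed

lemma esym_big: "j > length xs \<Longrightarrow> esym j xs = 0"
proof -
  assume j: "j > length xs"
  have E: "{S. S \<subseteq> {..<length xs} \<and> card S = j} = {}"
  proof (intro equalityI subsetI)
    fix S assume "S \<in> {S. S \<subseteq> {..<length xs} \<and> card S = j}"
    then have "S \<subseteq> {..<length xs}" "card S = j" by auto
    then have "j \<le> length xs" using card_mono[of "{..<length xs}" S] by simp
    then show "S \<in> {}" using j by simp
  qed auto
  show ?thesis unfolding esym_def E by simp
qed

lemma esym_snoc_Suc: "esym (Suc j) (xs @ [x]) = esym (Suc j) xs + x * esym j xs"
proof -
  let ?n = "length xs"
  let ?A = "{S. S \<subseteq> {..<Suc ?n} \<and> card S = Suc j}"
  let ?A1 = "{S. S \<subseteq> {..<?n} \<and> card S = Suc j}"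
  let ?B = "{S. S \<subseteq> {..<?n} \<and> card S = j}"
  let ?A2 = "insert ?n ` ?B"
  have AU: "?A = ?A1 \<union> ?A2"
  proof (intro equalityI subsetI)
    fix S assume S: "S \<in> ?A"
    then have S1: "S \<subseteq> {..<Suc ?n}" and S2: "card S = Suc j" by auto
    have fS: "finite S" using S1 fin_sub_lt by blast
    show "S \<in> ?A1 \<union> ?A2"
    proof (cases "?n \<in> S")
      case True
      have "card (S - {?n}) = j" using S2 True fS by simp
      moreover have "S - {?n} \<subseteq> {..<?n}" using S1 by auto
      ultimately have "S - {?n} \<in> ?B" by simp
      moreover have "S = insert ?n (S - {?n})" using True by auto
      ultimately show ?thesis by blast
    next
      case False
      then have "S \<subseteq> {..<?n}" using S1 by (auto simp: less_Suc_eq)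
      then show ?thesis using S2 by simp
    qed
  next
    fix S assume "S \<in> ?A1 \<union> ?A2"
    then show "S \<in> ?A"
    proof
      assume "S \<in> ?A1" then show ?thesis by auto
    next
      assume "S \<in> ?A2"
      then obtain T where T1: "T \<subseteq> {..<?n}" and T2: "card T = j" and T3: "S = insert ?n T" by auto
      have "finite T" using T1 fin_sub_lt by blast
      moreover have "?n \<notin> T" using T1 by auto
      ultimately have "card S = Suc j" using T2 T3 by simp
      moreover have "S \<subseteq> {..<Suc ?n}" using T1 T3 by auto
      ultimately show ?thesis by simp
    qed
  qed
  have disj: "?A1 \<inter> ?A2 = {}" by auto
  have fA1: "finite ?A1" by (rule finite_subset[of _ "Pow {..<?n}"]) auto
  have fB: "finite ?B" by (rule finite_subset[of _ "Pow {..<?n}"]) auto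
  have inj: "inj_on (insert ?n) ?B"
  proof (rule inj_onI)
    fix S T assume "S \<in> ?B" "T \<in> ?B" and e: "insert ?n S = insert ?n T"
    then have "?n \<notin> S" "?n \<notin> T" by auto
    then show "S = T" using e by (metis insert_ident)
  qed
  have e1: "(\<Sum>S\<in>?A1. \<Prod>i\<in>S. (xs @ [x]) ! i) = esym (Suc j) xs"
    unfolding esym_def
  proof (rule sum.cong[OF refl], rule prod.cong[OF refl])
    fix S i assume "S \<in> ?A1" "i \<in> S"
    then have "i < ?n" by auto
    then show "(xs @ [x]) ! i = xs ! i" by (simp add: nth_append)
  qed
  have e2: "(\<Sum>S\<in>?A2. \<Prod>i\<in>S. (xs @ [x]) ! i) = x * esym j xs"
  proof -
    have "(\<Sum>S\<in>?A2. \<Prod>i\<in>S. (xs @ [x]) ! i) = (\<Sum>T\<in>?B. \<Prod>i\<in>insert ?n T. (xs @ [x]) ! i)"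
      by (rule sum.reindex[OF inj, unfolded comp_def])
    also have "\<dots> = (\<Sum>T\<in>?B. x * (\<Prod>i\<in>T. xs ! i))"
    proof (rule sum.cong[OF refl])
      fix T assume T: "T \<in> ?B"
      then have T1: "T \<subseteq> {..<?n}" by simp
      have fT: "finite T" using T1 fin_sub_lt by blast
      have nT: "?n \<notin> T" using T1 by auto
      have "(\<Prod>i\<in>insert ?n T. (xs @ [x]) ! i) = (xs @ [x]) ! ?n * (\<Prod>i\<in>T. (xs @ [x]) ! i)"
        by (rule prod.insert[OF fT nT])
      also have "(\<Prod>i\<in>T. (xs @ [x]) ! i) = (\<Prod>i\<in>T. xs ! i)"
      proof (rule prod.cong[OF refl])
        fix i assume "i \<in> T" then have "i < ?n" using T1 by auto
        then show "(xs @ [x]) ! i = xs ! i" by (simp add: nth_append)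
      qed
      finally show "(\<Prod>i\<in>insert ?n T. (xs @ [x]) ! i) = x * (\<Prod>i\<in>T. xs ! i)" by simp
    qed
    also have "\<dots> = x * esym j xs" by (simp add: esym_def sum_distrib_left)
    finally show ?thesis .
  qed
  have "esym (Suc j) (xs @ [x]) = (\<Sum>S\<in>?A. \<Prod>i\<in>S. (xs @ [x]) ! i)"
    by (simp add: esym_def)
  also have "\<dots> = (\<Sum>S\<in>?A1. \<Prod>i\<in>S. (xs @ [x]) ! i) + (\<Sum>S\<in>?A2. \<Prod>i\<in>S. (xs @ [x]) ! i)"
    unfolding AU by (rule sum.union_disjoint[OF fA1 finite_imageI[OF fB] disj])
  finally show ?thesis using e1 e2 by simp
qed

definition linf :: "complex \<Rightarrow> complex fps" where
  "linf b = 1 - fps_const b * fps_X"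

lemma mult_linf: "A * linf b = A - fps_const b * (fps_X * A)"
  by (simp add: linf_def algebra_simps)

lemma mult_linf_nth: "(A * linf b) $ l = A $ l - b * (if l = 0 then 0 else A $ (l - 1))"
  unfolding mult_linf by (simp add: fps_X_mult_nth)

lemma linf_nth0[simp]: "linf b $ 0 = 1"
  by (simp add: linf_def)

lemma vieta: "(prod_list (map linf bs)) $ l = (-1) ^ l * esym l bs"
proof (induction bs arbitrary: l rule: rev_induct)
  case Nil
  then show ?case
    by (cases l) (auto simp: esym_big)
next
  case (snoc x xs)
  have pe: "prod_list (map linf (xs @ [x])) = prod_list (map linf xs) * linf x" by simp
  show ?case
  proof (cases l)
    case 0
    then show ?thesis unfolding pe mult_linf_nth by (simp add: snoc.IH)
  next
    case (Suc j)
    then show ?thesis unfolding pe mult_linf_nth by (simp add: snoc.IH esym_snoc_Suc algebra_simps)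
  qed
qed

section \<open>Newton identities\<close>

definition geo :: "complex \<Rightarrow> complex fps" where
  "geo x = Abs_fps (\<lambda>k. x ^ k)"

definition HX :: "complex list \<Rightarrow> complex fps" where
  "HX xs = prod_list (map geo xs)"

definition HY :: "complex list \<Rightarrow> complex fps" where
  "HY ys = prod_list (map (\<lambda>y. linf (- y)) ys)"

definition HXY :: "complex list \<Rightarrow> complex list \<Rightarrow> complex fps" where
  "HXY xs ys = HY ys * HX xs"

definition newton :: "complex fps \<Rightarrow> complex fps \<Rightarrow> bool" where
  "newton F P \<longleftrightarrow> fps_X * fps_deriv F = P * F"

lemma newton_mult: "newton F P \<Longrightarrow> newton G Q \<Longrightarrow> newton (F * G) (P + Q)"
  unfolding newton_def
proof -
  assume a: "fps_X * fps_deriv F = P * F" "fps_X * fps_deriv G = Q * G"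
  have "fps_X * fps_deriv (F * G) = F * (fps_X * fps_deriv G) + (fps_X * fps_deriv F) * G"
    by (simp add: algebra_simps)
  also have "\<dots> = (P + Q) * (F * G)" using a by (simp add: algebra_simps)
  finally show "fps_X * fps_deriv (F * G) = (P + Q) * (F * G)" .
qed

definition PXs :: "complex list \<Rightarrow> complex fps" where
  "PXs xs = Abs_fps (\<lambda>k. if k = 0 then 0 else (\<Sum>x\<leftarrow>xs. x ^ k))"

definition PYs :: "complex list \<Rightarrow> complex fps" where
  "PYs ys = Abs_fps (\<lambda>k. if k = 0 then 0 else (-1) ^ (k - 1) * (\<Sum>y\<leftarrow>ys. y ^ k))"

lemma PXs_single: "PXs [x] = Abs_fps (\<lambda>k. if k = 0 then 0 else x ^ k)"
  by (rule fps_ext) (simp add: PXs_def)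

lemma newton_geo: "newton (geo x) (PXs [x])"
  unfolding newton_def PXs_single
proof (rule fps_ext)
  fix n
  show "(fps_X * fps_deriv (geo x)) $ n = (Abs_fps (\<lambda>k. if k = 0 then 0 else x ^ k) * geo x) $ n"
  proof (cases n)
    case 0
    then show ?thesis by simp
  next
    case (Suc m)
    have "(Abs_fps (\<lambda>k. if k = 0 then 0 else x ^ k) * geo x) $ n = (\<Sum>i=0..n. (if i = 0 then 0 else x ^ i) * x ^ (n - i))"
      by (simp add: fps_mult_nth geo_def)
    also have "\<dots> = (\<Sum>i\<in>{1..n}. x ^ n)"
      by (rule sum.mono_neutral_cong_right) (auto simp: power_add[symmetric])
    also have "\<dots> = of_nat n * x ^ n" by simp
    finally show ?thesis using Suc by (simp add: geo_def)
  qed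
qed

lemma newton_lin: "newton (linf (- y)) (PYs [y])"
  unfolding newton_def
proof (rule fps_ext)
  fix n
  show "(fps_X * fps_deriv (linf (- y))) $ n = (PYs [y] * linf (- y)) $ n"
  proof (cases n)
    case 0
    then show ?thesis by (simp add: PYs_def linf_def)
  next
    case (Suc m)
    show ?thesis
    proof (cases m)
      case 0
      then show ?thesis using Suc by (simp add: PYs_def linf_def mult_linf_nth)
    next
      case (Suc m')
      then show ?thesis using \<open>n = Suc m\<close>
        by (simp add: mult_linf_nth PYs_def) (simp add: linf_def)
    qed
  qed
qed

lemma newton_one: "newton 1 0" by (simp add: newton_def)

lemma PXs_cons: "PXs (x # xs) = PXs [x] + PXs xs"
  by (rule fps_ext) (simp add: PXs_def)

lemma PYs_cons: "PYs (y # ys) = PYs [y] + PYs ys"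
  by (rule fps_ext) (simp add: PYs_def algebra_simps)

lemma newton_HX: "newton (HX xs) (PXs xs)"
proof (induction xs)
  case Nil
  have "PXs [] = 0" by (rule fps_ext) (simp add: PXs_def)
  then show ?case using newton_one by (simp add: HX_def)
next
  case (Cons x xs)
  then show ?case
    using newton_mult[OF newton_geo Cons.IH] by (simp add: HX_def PXs_cons[of x xs])
qed

lemma newton_HY: "newton (HY ys) (PYs ys)"
proof (induction ys)
  case Nil
  have "PYs [] = 0" by (rule fps_ext) (simp add: PYs_def)
  then show ?case using newton_one by (simp add: HY_def)
next
  case (Cons y ys)
  then show ?case
    using newton_mult[OF newton_lin Cons.IH] by (simp add: HY_def PYs_cons[of y ys])
qed

lemma newton_HXY: "newton (HXY xs ys) (Abs_fps (\<lambda>k. if k = 0 then 0 else psum xs ys k))"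
proof -
  have eq: "PYs ys + PXs xs = Abs_fps (\<lambda>k. if k = 0 then 0 else psum xs ys k)"
    by (rule fps_ext) (simp add: PXs_def PYs_def psum_def)
  show ?thesis unfolding HXY_def eq[symmetric] by (rule newton_mult[OF newton_HY newton_HX])
qed

lemma HXY_rec: "of_nat (Suc n) * HXY xs ys $ Suc n = (\<Sum>i=1..Suc n. psum xs ys i * HXY xs ys $ (Suc n - i))"
proof -
  let ?P = "Abs_fps (\<lambda>k. if k = 0 then 0 else psum xs ys k)"
  have "(fps_X * fps_deriv (HXY xs ys)) $ Suc n = (?P * HXY xs ys) $ Suc n"
    using newton_HXY unfolding newton_def by simp
  moreover have "(fps_X * fps_deriv (HXY xs ys)) $ Suc n = of_nat (Suc n) * HXY xs ys $ Suc n"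
    by (simp add: algebra_simps)
  moreover have "(?P * HXY xs ys) $ Suc n = (\<Sum>i=0..Suc n. (if i = 0 then 0 else psum xs ys i) * HXY xs ys $ (Suc n - i))"
    by (simp add: fps_mult_nth)
  moreover have "\<dots> = (\<Sum>i=1..Suc n. psum xs ys i * HXY xs ys $ (Suc n - i))"
    by (rule sum.mono_neutral_cong_right) auto
  ultimately show ?thesis by simp
qed

section \<open>Evaluation of h_k\<close>

lemma prod_list_nth0: "(prod_list (map f l)) $ 0 = prod_list (map (\<lambda>x. f x $ 0) l)"
  by (induction l) auto

lemma prod_list_ones[simp]: "prod_list (map (\<lambda>_. 1) l) = 1"
  by (induction l) auto

lemma geo_nth0[simp]: "geo x $ 0 = 1" by (simp add: geo_def)

lemma HXY_nth0[simp]: "HXY xs ys $ 0 = 1"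
  by (simp add: HXY_def HX_def HY_def prod_list_nth0 comp_def)

lemma length_hlist: "length (hlist k) = Suc k"
  by (induction k) auto

lemma hlist_nth: "j \<le> k \<Longrightarrow> hlist k ! j = hcomp j"
proof (induction k)
  case 0
  then show ?case by (simp add: hcomp_def)
next
  case (Suc k)
  show ?case
  proof (cases "j = Suc k")
    case True
    then show ?thesis by (simp add: hcomp_def)
  next
    case False
    then have "j \<le> k" using Suc.prems by simp
    then show ?thesis using Suc.IH by (simp add: nth_append length_hlist)
  qed
qed

lemma hcomp_Suc: "hcomp (Suc k) =
  constL (1 / of_nat (Suc k)) * (\<Sum>i=1..Suc k. pvar i * hcomp (Suc k - i))"
proof -
  have "hcomp (Suc k) = constL (1 / of_nat (Suc k)) * (\<Sum>i=1..Suc k. pvar i * (hlist k ! (Suc k - i)))"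
    by (simp add: hcomp_def nth_append length_hlist)
  also have "(\<Sum>i=1..Suc k. pvar i * (hlist k ! (Suc k - i))) = (\<Sum>i=1..Suc k. pvar i * hcomp (Suc k - i))"
    by (rule sum.cong) (auto simp: hlist_nth)
  finally show ?thesis .
qed

lemma eval_hcomp: "evalL (hcomp k) xs ys = HXY xs ys $ k"
proof (induction k rule: less_induct)
  case (less k)
  show ?case
  proof (cases k)
    case 0
    then show ?thesis by (simp add: hcomp_def)
  next
    case (Suc n)
    have "evalL (hcomp k) xs ys = 1 / of_nat (Suc n) * (\<Sum>i=1..Suc n. psum xs ys i * HXY xs ys $ (Suc n - i))"
      unfolding Suc hcomp_Suc evalL_mult evalL_constL evalL_sum
      by (auto intro!: sum.cong simp: evalL_mult evalL_pvar less.IH Suc)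
    also have "\<dots> = HXY xs ys $ k"
      unfolding HXY_rec[symmetric] Suc by (simp del: of_nat_Suc)
    finally show ?thesis .
  qed
qed

lemma eval_hshift:
  assumes k: "k \<ge> 1"
  shows "evalL (hshift k b) xs ys =
    (prod_list (map (\<lambda>m. linf (b (int m))) [1..<nat k]) * HXY xs ys) $ nat k"
proof -
  let ?bl = "map (\<lambda>m. b (int m)) [1..<nat k]"
  have len: "length ?bl = nat k - 1" by simp
  have "evalL (hshift k b) xs ys = (\<Sum>i=1..nat k. (-1) ^ (nat k - i) * esym (nat k - i) ?bl * HXY xs ys $ i)"
    using k by (simp add: hshift_def evalL_sum evalL_mult eval_hcomp)
  also have "\<dots> = (\<Sum>i=0..nat k. (-1) ^ (nat k - i) * esym (nat k - i) ?bl * HXY xs ys $ i)"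
    using k by (subst sum.atLeast_Suc_atMost[of 0]) (auto simp: esym_big)
  also have "\<dots> = (\<Sum>i=0..nat k. (-1) ^ i * esym i ?bl * HXY xs ys $ (nat k - i))"
    by (rule sum.reindex_bij_witness[of _ "\<lambda>i. nat k - i" "\<lambda>i. nat k - i"]) auto
  also have "\<dots> = (prod_list (map (\<lambda>m. linf (b (int m))) [1..<nat k]) * HXY xs ys) $ nat k"
  proof -
    have v: "\<And>i. (prod_list (map (\<lambda>m. linf (b (int m))) [1..<nat k])) $ i = (-1)^i * esym i ?bl"
      using vieta[of ?bl] by (simp add: comp_def)
    show ?thesis by (simp only: fps_mult_nth v)
  qed
  finally show ?thesis .
qed


no_notation vec_index (infixl \<open>$\<close> 100)
notation fps_nth (infixl \<open>$\<close> 75)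

definition HZ :: "complex set \<Rightarrow> complex fps" where
  "HZ Z = (\<Prod>z\<in>Z. geo z)"

definition coefi :: "complex fps \<Rightarrow> int \<Rightarrow> complex" where
  "coefi F k = (if k < 0 then 0 else F $ nat k)"

definition den :: "complex set \<Rightarrow> complex \<Rightarrow> complex" where
  "den Z z = (\<Prod>z'\<in>Z - {z}. z - z')"

definition Dd :: "nat \<Rightarrow> complex list \<Rightarrow> complex set \<Rightarrow> complex" where
  "Dd e Y Z = (\<Sum>z\<in>Z. z ^ e * prod_list (map (\<lambda>y. z - y) Y) / den Z z)"

lemma geo_linf: "geo w * linf w = 1"
proof (rule fps_ext)
  fix n show "(geo w * linf w) $ n = 1 $ n"
    by (cases n) (auto simp: mult_linf_nth geo_def)
qed

lemma coefi_linf: "coefi (linf y * F) m = coefi F m - y * coefi F (m - 1)"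
  by (auto simp: coefi_def mult.commute[of "linf y"] mult_linf_nth nat_diff_distrib)

lemma HZ_insert: "finite Z \<Longrightarrow> w \<notin> Z \<Longrightarrow> HZ (insert w Z) = geo w * HZ Z"
  by (simp add: HZ_def)

lemma coefi_HZ_insert:
  assumes "finite Z" "w \<notin> Z"
  shows "coefi (HZ (insert w Z)) m = coefi (HZ Z) m + w * coefi (HZ (insert w Z)) (m - 1)"
proof -
  have "linf w * HZ (insert w Z) = HZ Z"
    using assms geo_linf by (simp add: HZ_insert algebra_simps)
  then have "coefi (HZ Z) m = coefi (HZ (insert w Z)) m - w * coefi (HZ (insert w Z)) (m - 1)"
    using coefi_linf[of w "HZ (insert w Z)" m] by simp
  thus ?thesis by simp
qed

lemma den_insert:
  assumes "finite Z" "w \<notin> Z" "z \<in> Z"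
  shows "den (insert w Z) z = (z - w) * den Z z"
proof -
  have "insert w Z - {z} = insert w (Z - {z})" using assms by auto
  thus ?thesis using assms by (simp add: den_def)
qed

lemma den_nz: "finite Z \<Longrightarrow> den Z z \<noteq> 0"
  by (simp add: den_def)

lemma Dd_rec_e:
  assumes "finite Z" "w \<notin> Z"
  shows "Dd (Suc e) [] (insert w Z) = Dd e [] Z + w * Dd e [] (insert w Z)"
proof -
  let ?W = "insert w Z"
  have "Dd (Suc e) [] ?W - w * Dd e [] ?W = (\<Sum>z\<in>?W. z ^ e * (z - w) / den ?W z)"
    by (simp add: Dd_def sum_distrib_left sum_subtractf[symmetric] algebra_simps diff_divide_distrib)
  also have "\<dots> = (\<Sum>z\<in>Z. z ^ e * (z - w) / den ?W z)"
    using assms by simp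
  also have "\<dots> = (\<Sum>z\<in>Z. z ^ e / den Z z)"
  proof (rule sum.cong[OF refl])
    fix z assume z: "z \<in> Z"
    then have "z - w \<noteq> 0" using assms by auto
    then show "z ^ e * (z - w) / den ?W z = z ^ e / den Z z"
      using den_insert[OF assms z] by simp
  qed
  also have "\<dots> = Dd e [] Z" by (simp add: Dd_def)
  finally show ?thesis by (simp add: algebra_simps)
qed

definition Tm :: "nat \<Rightarrow> complex set \<Rightarrow> complex" where
  "Tm e Z = coefi (HZ Z) (int e + 1 - int (card Z))"

lemma Tm_rec_e:
  assumes "finite Z" "w \<notin> Z"
  shows "Tm (Suc e) (insert w Z) = Tm e Z + w * Tm e (insert w Z)"
  using coefi_HZ_insert[OF assms, of "int e + 1 - int (card Z)"] assms
  by (simp add: Tm_def algebra_simps)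

lemma Tm0: "Tm 0 Z = (if card Z = 1 then 1 else 0)"
proof -
  consider "card Z = 0" | "card Z = 1" | "card Z \<ge> 2" by linarith
  then show ?thesis
  proof cases
    case 1
    have "HZ Z $ 1 = 0"
    proof (cases "finite Z")
      case True then have "Z = {}" using 1 by simp
      then show ?thesis by (simp add: HZ_def)
    next
      case False then show ?thesis by (simp add: HZ_def)
    qed
    then show ?thesis using 1 by (simp add: Tm_def coefi_def)
  next
    case 2
    then obtain w where "Z = {w}" using card_1_singletonE by blast
    then show ?thesis by (simp add: Tm_def coefi_def HZ_def)
  next
    case 3
    then show ?thesis by (simp add: Tm_def coefi_def)
  qed
qed

lemma Dd_empty: "Dd e Y {} = 0" by (simp add: Dd_def)
lemma Tm_empty: "Tm e {} = 0" by (simp add: Tm_def coefi_def HZ_def)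

lemma Dd_single: "Dd 0 [] {w} = 1"
  by (simp add: Dd_def den_def)

lemma Dd_mono_aux:
  "\<forall>Z. finite Z \<longrightarrow> card Z = n \<longrightarrow> (\<forall>e. Dd e [] Z = Tm e Z)"
proof (induction n rule: less_induct)
  case (less n)
  show ?case
  proof (intro allI impI)
    fix Z :: "complex set" and e assume fZ: "finite Z" and cZ: "card Z = n"
    show "Dd e [] Z = Tm e Z"
    proof (cases "n = 0")
      case True
      then have "Z = {}" using fZ cZ by simp
      then show ?thesis by (simp add: Dd_empty Tm_empty)
    next
      case False
      then obtain w where w: "w \<in> Z" using cZ by fastforce
      let ?Z' = "Z - {w}"
      have fZ': "finite ?Z'" using fZ by simp
      have wZ': "w \<notin> ?Z'" by simp
      have ZZ: "Z = insert w ?Z'" using w by auto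
      have cZ': "card ?Z' < n" using cZ w fZ False by simp
      have IH': "\<And>e. Dd e [] ?Z' = Tm e ?Z'" using less.IH[OF cZ'] fZ' by simp
      show ?thesis
      proof (induction e)
        case 0
        show ?case
        proof (cases "n = 1")
          case True
          then have "card ?Z' = 0" using cZ w fZ by simp
          then have "?Z' = {}" using fZ' by simp
          then have "Z = {w}" using ZZ by blast
          then show ?thesis using Dd_single Tm0 by simp
        next
          case False
          then have n2: "n \<ge> 2" using \<open>n \<noteq> 0\<close> by simp
          then have "card ?Z' \<ge> 1" using cZ w fZ by simp
          then have "?Z' \<noteq> {}" by (metis card.empty not_one_le_zero)
          then obtain v where v: "v \<in> ?Z'" by blast
          let ?Z'' = "Z - {v}"
          have fZ'': "finite ?Z''" using fZ by simp
          have vZ'': "v \<notin> ?Z''" by simp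
          have vZ: "v \<in> Z" and vw: "v \<noteq> w" using v by auto
          have ZZ2: "Z = insert v ?Z''" using vZ by auto
          have cZ'': "card ?Z'' < n" using cZ vZ fZ n2 by simp
          have IH'': "\<And>e. Dd e [] ?Z'' = Tm e ?Z''" using less.IH[OF cZ''] fZ'' by simp
          have c1: "card ?Z' = card ?Z''" using cZ w vZ fZ by simp
          have t: "Tm 0 ?Z' = Tm 0 ?Z''" using c1 by (simp add: Tm0)
          have r1: "Dd 1 [] Z = Dd 0 [] ?Z' + w * Dd 0 [] Z"
            using Dd_rec_e[OF fZ' wZ', of 0] ZZ by simp
          have r2: "Dd 1 [] Z = Dd 0 [] ?Z'' + v * Dd 0 [] Z"
            using Dd_rec_e[OF fZ'' vZ'', of 0] ZZ2 by simp
          have "(w - v) * Dd 0 [] Z = 0"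
            using r1 r2 IH' IH'' t by (simp add: algebra_simps)
          then have "Dd 0 [] Z = 0" using vw by simp
          moreover have "Tm 0 Z = 0" using n2 cZ by (simp add: Tm0)
          ultimately show ?thesis by simp
        qed
      next
        case (Suc e)
        have "Dd (Suc e) [] Z = Dd e [] ?Z' + w * Dd e [] Z"
          using Dd_rec_e[OF fZ' wZ', of e] ZZ by simp
        also have "\<dots> = Tm e ?Z' + w * Tm e Z" using IH' Suc by simp
        also have "\<dots> = Tm (Suc e) Z"
          using Tm_rec_e[OF fZ' wZ', of e] ZZ by simp
        finally show ?case .
      qed
    qed
  qed
qed

lemma Dd_mono: "finite Z \<Longrightarrow> Dd e [] Z = Tm e Z"
  using Dd_mono_aux by blast

lemma Dd_cons: "Dd e (y # Y) Z = Dd (Suc e) Y Z - y * Dd e Y Z"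
  by (simp add: Dd_def sum_distrib_left sum_subtractf[symmetric] algebra_simps diff_divide_distrib)

theorem LI:
  assumes "finite Z"
  shows "Dd e Y Z = coefi (prod_list (map linf Y) * HZ Z) (int e + int (length Y) + 1 - int (card Z))"
proof (induction Y arbitrary: e)
  case Nil
  then show ?case using Dd_mono[OF assms] by (simp add: Tm_def)
next
  case (Cons y Y)
  let ?G = "prod_list (map linf Y) * HZ Z"
  let ?M = "int e + int (length (y # Y)) + 1 - int (card Z)"
  have e1: "prod_list (map linf (y # Y)) * HZ Z = linf y * ?G" by (simp add: mult.assoc)
  have i1: "?M = int (Suc e) + int (length Y) + 1 - int (card Z)" by simp
  have i2: "int (Suc e) + int (length Y) + 1 - int (card Z) - 1 = int e + int (length Y) + 1 - int (card Z)" by simp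
  have "Dd e (y # Y) Z = Dd (Suc e) Y Z - y * Dd e Y Z" by (rule Dd_cons)
  also have "\<dots> = coefi ?G ?M - y * coefi ?G (?M - 1)"
    unfolding i1 by (simp only: Cons.IH i2)
  also have "\<dots> = coefi (prod_list (map linf (y # Y)) * HZ Z) ?M"
    unfolding e1 coefi_linf ..
  finally show ?case .
qed


no_notation vec_index (infixl \<open>$\<close> 100)
notation fps_nth (infixl \<open>$\<close> 75)

lemma filter_upt_down:
  assumes "\<And>i j. i \<le> j \<Longrightarrow> j < n \<Longrightarrow> P j \<Longrightarrow> P i"
  shows "filter P [0..<n] = [0..<length (filter P [0..<n])]"
  using assms
proof (induction n)
  case 0
  then show ?case by simp
next
  case (Suc n)
  have IH: "filter P [0..<n] = [0..<length (filter P [0..<n])]"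
    using Suc.prems by (intro Suc.IH) auto
  show ?case
  proof (cases "P n")
    case True
    have "\<forall>i<n. P i" using Suc.prems[of _ n] True by auto
    then have "filter P [0..<n] = [0..<n]" by (simp add: filter_id_conv)
    then show ?thesis using True by simp
  next
    case False
    then show ?thesis using IH by simp
  qed
qed

lemma part_mono: "is_partition l \<Longrightarrow> i \<le> j \<Longrightarrow> j < length l \<Longrightarrow> l ! j \<le> l ! i"
  unfolding is_partition_def
  by (metis le_neq_implies_less order.refl sorted_wrt_iff_nth_less)

lemma part_pos: "is_partition l \<Longrightarrow> i < length l \<Longrightarrow> 0 < l ! i"
  unfolding is_partition_def by auto

lemma dlen_iff:
  assumes "is_partition l"
  shows "i < dlen l \<longleftrightarrow> i < length l \<and> i + 1 \<le> l ! i"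
proof -
  let ?P = "\<lambda>i. i + 1 \<le> l ! i"
  have dc: "\<And>i j. i \<le> j \<Longrightarrow> j < length l \<Longrightarrow> ?P j \<Longrightarrow> ?P i"
    using part_mono[OF assms] by (meson add_le_mono1 le_trans)
  have e: "filter ?P [0..<length l] = [0..<dlen l]"
    unfolding dlen_def by (rule filter_upt_down[OF dc])
  have "i < dlen l \<longleftrightarrow> i \<in> set (filter ?P [0..<length l])"
    unfolding e by simp
  also have "\<dots> \<longleftrightarrow> i < length l \<and> ?P i" by simp
  finally show ?thesis .
qed

lemma dlen_le: "dlen l \<le> length l"
  unfolding dlen_def by (metis length_filter_le length_upt minus_nat.diff_0)

definition qt :: "nat list \<Rightarrow> nat \<Rightarrow> int" where
  "qt l t = int (conjp l (t + 1)) - int (t + 1)"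

lemma length_xpt[simp]: "length (xpt a l) = dlen l"
  by (simp add: xpt_def)

lemma xpt_nth: "i < dlen l \<Longrightarrow> xpt a l ! i = a (int (l ! i) - int i)"
  by (simp add: xpt_def)

lemma ypt_map: "ypt a l = map (\<lambda>t. - a (- qt l t)) [0..<dlen l]"
  by (simp add: ypt_def qt_def algebra_simps)

lemma xpt_idx:
  assumes "is_partition l" "i < dlen l"
  shows "int (l ! i) - int i \<ge> 1"
  using dlen_iff[OF assms(1)] assms(2) by simp

lemma xpt_idx_strict:
  assumes "is_partition l" "i < j" "j < dlen l"
  shows "int (l ! j) - int j < int (l ! i) - int i"
proof -
  have "j < length l" using dlen_iff[OF assms(1)] assms(3) by simp
  then have "l ! j \<le> l ! i" using part_mono[OF assms(1)] assms(2) by simp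
  then show ?thesis using assms(2) by simp
qed

lemma distinct_xpt:
  assumes "inj a" "is_partition l"
  shows "distinct (xpt a l)"
proof -
  have "inj_on (\<lambda>i. a (int (l ! i) - int i)) {0..<dlen l}"
  proof (rule inj_onI)
    fix i j assume i: "i \<in> {0..<dlen l}" and j: "j \<in> {0..<dlen l}"
      and e: "a (int (l ! i) - int i) = a (int (l ! j) - int j)"
    then have e2: "int (l ! i) - int i = int (l ! j) - int j" using assms(1) by (simp add: inj_eq)
    show "i = j"
    proof (rule ccontr)
      assume "i \<noteq> j"
      then have "i < j \<or> j < i" by auto
      then show False using xpt_idx_strict[OF assms(2)] i j e2 by fastforce
    qed
  qed
  then show ?thesis unfolding xpt_def by (simp add: distinct_map)
qed

lemma set_xpt: "set (xpt a l) = (\<lambda>i. a (int (l ! i) - int i)) ` {0..<dlen l}"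
  by (auto simp: xpt_def)

section \<open>Key lemma: entries as sums over poles\<close>

definition Zset :: "(int \<Rightarrow> complex) \<Rightarrow> nat list \<Rightarrow> nat \<Rightarrow> complex set" where
  "Zset a l N = set (xpt a l) \<union> a ` {- int N..0}"

definition psi :: "(int \<Rightarrow> complex) \<Rightarrow> nat \<Rightarrow> complex \<Rightarrow> complex" where
  "psi a j z = (\<Prod>w\<in>{1 - int j..0}. z - a w)"

definition num :: "(int \<Rightarrow> complex) \<Rightarrow> nat list \<Rightarrow> nat \<Rightarrow> int \<Rightarrow> complex \<Rightarrow> complex" where
  "num a l N P z = (\<Prod>t<dlen l. z - a (- qt l t)) * (\<Prod>w\<in>{1..P}. z - a w) * (\<Prod>w\<in>{- int N..min 0 P}. z - a w)"

lemma prod_split_int: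
  assumes "a \<le> m + 1" "m \<le> b"
  shows "prod f {a..b::int} = prod f {a..m} * prod f {m+1..b}"
proof -
  have "{a..b} = {a..m} \<union> {m+1..b}" using assms by auto
  moreover have "{a..m} \<inter> {m+1..b} = {}" by auto
  ultimately show ?thesis by (simp add: prod.union_disjoint)
qed

lemma Zset_props:
  assumes "inj a" "is_partition l"
  shows "finite (Zset a l N)" "card (Zset a l N) = dlen l + N + 1"
    "set (xpt a l) \<inter> a ` {- int N..0} = {}"
proof -
  show "finite (Zset a l N)" by (simp add: Zset_def)
  show dj: "set (xpt a l) \<inter> a ` {- int N..0} = {}"
  proof (rule ccontr)
    assume "set (xpt a l) \<inter> a ` {- int N..0} \<noteq> {}"
    then obtain z where z1: "z \<in> set (xpt a l)" and z2: "z \<in> a ` {- int N..0}" by blast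
    from z1 obtain i where i: "i < dlen l" and ez: "z = a (int (l ! i) - int i)" unfolding set_xpt by auto
    from z2 obtain w where w: "w \<in> {- int N..0}" and ew: "z = a w" by blast
    have e: "a (int (l ! i) - int i) = a w" using ez ew by simp
    then have "int (l ! i) - int i = w" using assms(1) by (simp add: inj_eq)
    then show False using xpt_idx[OF assms(2) i] w by simp
  qed
  have c1: "card (set (xpt a l)) = dlen l"
    using distinct_card[OF distinct_xpt[OF assms]] by simp
  have c2: "card (a ` {- int N..0}) = N + 1"
    using assms(1) by (simp add: card_image inj_on_subset[of a UNIV])
  show "card (Zset a l N) = dlen l + N + 1"
    unfolding Zset_def using card_Un_disjoint[OF _ _ dj] c1 c2 by simp
qed

lemma HZ_union: "finite A \<Longrightarrow> finite B \<Longrightarrow> A \<inter> B = {} \<Longrightarrow> HZ (A \<union> B) = HZ A * HZ B"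
  by (simp add: HZ_def prod.union_disjoint)

lemma HZ_image_linf:
  assumes "inj a" "finite W"
  shows "HZ (a ` W) * (\<Prod>w\<in>W. linf (a w)) = 1"
proof -
  have "HZ (a ` W) = (\<Prod>w\<in>W. geo (a w))"
    unfolding HZ_def using assms by (simp add: prod.reindex inj_on_subset[of a UNIV])
  then have "HZ (a ` W) * (\<Prod>w\<in>W. linf (a w)) = (\<Prod>w\<in>W. geo (a w) * linf (a w))"
    by (simp add: prod.distrib)
  also have "\<dots> = 1" by (simp add: geo_linf)
  finally show ?thesis .
qed

lemma prod_list_map_linf_upto: "prod_list (map (\<lambda>w. linf (a w)) [m..n]) = (\<Prod>w\<in>{m..n}. linf (a w))"
  by (simp add: prod.distinct_set_conv_list[symmetric])

lemma prod_list_map_sub_upto: "prod_list (map (\<lambda>w. z - a w) [m..n]) = (\<Prod>w\<in>{m..n}. z - a w)"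
  by (simp add: prod.distinct_set_conv_list[symmetric])

lemma prod_list_upt_lessThan: "prod_list (map f [0..<n]) = (\<Prod>t<n. f t)"
  by (simp add: prod.distinct_set_conv_list[symmetric] atLeast0LessThan)

lemma LB_reindex:
  assumes "P + 1 + int j \<ge> 1"
  shows "prod_list (map (\<lambda>m. linf (a (int m - int j))) [1..<nat (P + 1 + int j)]) = (\<Prod>w\<in>{1 - int j..P}. linf (a w))"
proof -
  have "prod_list (map (\<lambda>m. linf (a (int m - int j))) [1..<nat (P + 1 + int j)]) =
      (\<Prod>m\<in>{1..<nat (P + 1 + int j)}. linf (a (int m - int j)))"
    by (simp add: prod.distinct_set_conv_list[symmetric])
  also have "\<dots> = (\<Prod>w\<in>{1 - int j..P}. linf (a w))"
  proof (rule prod.reindex_bij_witness[of _ "\<lambda>w. nat (w + int j)" "\<lambda>m. int m - int j"])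
    fix w assume "w \<in> {1 - int j..P}" then show "int (nat (w + int j)) - int j = w" by simp
  next
    fix w assume "w \<in> {1 - int j..P}" then show "nat (w + int j) \<in> {1..<nat (P + 1 + int j)}" by auto
  next
    fix m assume "m \<in> {1..<nat (P + 1 + int j)}" then show "nat (int m - int j + int j) = m" by simp
  next
    fix m assume "m \<in> {1..<nat (P + 1 + int j)}" then show "int m - int j \<in> {1 - int j..P}" by auto
  qed simp
  finally show ?thesis .
qed

lemma prod_set_nth0: "(prod f S) $ 0 = prod (\<lambda>x. f x $ 0) S"
  by (induction S rule: infinite_finite_induct) auto

lemma HXY_nth0': "(prod_list (map linf Y) * HZ Z) $ 0 = 1"
  by (simp add: prod_list_nth0 comp_def HZ_def prod_set_nth0)


no_notation vec_index (infixl \<open>$\<close> 100)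
notation fps_nth (infixl \<open>$\<close> 75)

lemma prod_list_sub_append: "prod_list (map (\<lambda>y. z - y) (A @ B)) = prod_list (map (\<lambda>y. z - y) A) * prod_list (map (\<lambda>y. z - y) B)"
  by simp

theorem KL:
  assumes inj: "inj a" and lp: "is_partition l" and PN: "P \<ge> - int N"
  shows "evalL (hshift (P + 1 + int j) (shiftseq (- int j) a)) (xpt a l) (ypt a l) =
    (\<Sum>z\<in>Zset a l N. psi a j z * num a l N P z / den (Zset a l N) z)"
proof -
  let ?Z = "Zset a l N"
  let ?xs = "xpt a l" and ?ys = "ypt a l" and ?d = "dlen l"
  let ?k = "P + 1 + int j"
  let ?LQ = "\<Prod>t<?d. linf (a (- qt l t))"
  let ?LAN = "\<Prod>w\<in>{- int N..0}. linf (a w)"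
  note Zp = Zset_props[OF inj lp, of N]
  have HX: "HX ?xs = HZ (set ?xs)"
    unfolding HX_def HZ_def using distinct_xpt[OF inj lp]
    by (simp add: prod.distinct_set_conv_list)
  have HY: "HY ?ys = ?LQ"
    unfolding HY_def ypt_map by (simp add: comp_def prod_list_upt_lessThan)
  have HZZ: "HZ ?Z = HZ (set ?xs) * HZ (a ` {- int N..0})"
    unfolding Zset_def by (rule HZ_union) (use Zp in auto)
  have HXZ: "HZ (set ?xs) = HZ ?Z * ?LAN"
    using HZ_image_linf[OF inj, of "{- int N..0}"] HZZ by (simp add: mult.assoc)
  have HXY: "HXY ?xs ?ys = ?LQ * (HZ ?Z * ?LAN)"
    unfolding HXY_def HX HY HXZ ..
  have LQl: "?LQ = prod_list (map linf (map (\<lambda>t. a (- qt l t)) [0..<?d]))"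
    by (simp add: comp_def prod_list_upt_lessThan)
  have LQs: "\<And>z. prod_list (map (\<lambda>y. z - y) (map (\<lambda>t. a (- qt l t)) [0..<?d])) = (\<Prod>t<?d. z - a (- qt l t))"
    by (simp add: comp_def prod_list_upt_lessThan)
  have lenZ: "int (card ?Z) = int ?d + int N + 1" using Zp by simp
  show ?thesis
  proof (cases "?k \<ge> 1")
    case True
    let ?LB = "\<Prod>w\<in>{1 - int j..P}. linf (a w)"
    let ?Y = "map a [1 - int j..P] @ map (\<lambda>t. a (- qt l t)) [0..<?d] @ map a [- int N..0]"
    have E1: "evalL (hshift ?k (shiftseq (- int j) a)) ?xs ?ys = (?LB * HXY ?xs ?ys) $ nat ?k"
      using eval_hshift[OF True, of "shiftseq (- int j) a" ?xs ?ys] LB_reindex[OF True, of a]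
      by (simp add: shiftseq_def)
    have PY: "prod_list (map linf ?Y) = ?LB * ?LQ * ?LAN"
      using LQl by (simp add: comp_def prod_list_map_linf_upto)
    have "?LB * HXY ?xs ?ys = prod_list (map linf ?Y) * HZ ?Z"
      unfolding HXY PY by (simp add: algebra_simps)
    then have E2: "evalL (hshift ?k (shiftseq (- int j) a)) ?xs ?ys = coefi (prod_list (map linf ?Y) * HZ ?Z) ?k"
      using E1 True by (simp add: coefi_def)
    have lenY: "int (length ?Y) = (?k - 1) + int ?d + int N + 1"
      using True PN by simp
    have LI1: "Dd 0 ?Y ?Z = coefi (prod_list (map linf ?Y) * HZ ?Z) ?k"
      using LI[OF Zp(1), of 0 ?Y] lenY lenZ by (simp add: algebra_simps)
    have prodY: "prod_list (map (\<lambda>y. z - y) ?Y) = psi a j z * num a l N P z" for z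
    proof -
      have "prod_list (map (\<lambda>y. z - y) ?Y) = (\<Prod>w\<in>{1 - int j..P}. z - a w) * (\<Prod>t<?d. z - a (- qt l t)) * (\<Prod>w\<in>{- int N..0}. z - a w)"
        using LQs[of z] by (simp add: comp_def prod_list_map_sub_upto)
      also have "\<dots> = psi a j z * num a l N P z"
      proof (cases "P \<ge> 0")
        case True
        have "(\<Prod>w\<in>{1 - int j..P}. z - a w) = (\<Prod>w\<in>{1 - int j..0}. z - a w) * (\<Prod>w\<in>{1..P}. z - a w)"
          using prod_split_int[of "1 - int j" 0 P] True by simp
        moreover have "min 0 P = 0" using True by simp
        ultimately show ?thesis unfolding psi_def num_def by (simp add: algebra_simps)
      next
        case False
        have s1: "(\<Prod>w\<in>{1 - int j..0}. z - a w) = (\<Prod>w\<in>{1 - int j..P}. z - a w) * (\<Prod>w\<in>{P+1..0}. z - a w)"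
          using prod_split_int[of "1 - int j" P 0] False \<open>?k \<ge> 1\<close> by simp
        have s2: "(\<Prod>w\<in>{- int N..0}. z - a w) = (\<Prod>w\<in>{- int N..P}. z - a w) * (\<Prod>w\<in>{P+1..0}. z - a w)"
          using prod_split_int[of "- int N" P 0] False PN by simp
        have "{1..P} = {}" using False by auto
        moreover have "min 0 P = P" using False by simp
        ultimately show ?thesis unfolding psi_def num_def s1 s2 by (simp add: algebra_simps)
      qed
      finally show ?thesis .
    qed
    have "Dd 0 ?Y ?Z = (\<Sum>z\<in>?Z. psi a j z * num a l N P z / den ?Z z)"
      unfolding Dd_def using prodY by simp
    then show ?thesis using E2 LI1 by simp
  next
    case False
    then have Pneg: "P < 0" by simp
    let ?Y = "map a [1 - int j..0] @ map (\<lambda>t. a (- qt l t)) [0..<?d] @ map a [- int N..P]"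
    have E1: "evalL (hshift ?k (shiftseq (- int j) a)) ?xs ?ys = (if ?k = 0 then 1 else 0)"
      using False by (simp add: hshift_def)
    have lenY: "int (length ?Y) = int j + int ?d + (P + int N + 1)"
      using PN by simp
    have LI1: "Dd 0 ?Y ?Z = coefi (prod_list (map linf ?Y) * HZ ?Z) ?k"
      using LI[OF Zp(1), of 0 ?Y] lenY lenZ by (simp add: algebra_simps)
    have C: "coefi (prod_list (map linf ?Y) * HZ ?Z) ?k = (if ?k = 0 then 1 else 0)"
      using False HXY_nth0'[of ?Y ?Z] by (auto simp: coefi_def)
    have prodY: "prod_list (map (\<lambda>y. z - y) ?Y) = psi a j z * num a l N P z" for z
    proof -
      have "{1..P} = {}" using Pneg by auto
      moreover have "min 0 P = P" using Pneg by simp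
      ultimately show ?thesis
        using LQs[of z] by (simp add: comp_def prod_list_map_sub_upto psi_def num_def algebra_simps)
    qed
    have "Dd 0 ?Y ?Z = (\<Sum>z\<in>?Z. psi a j z * num a l N P z / den ?Z z)"
      unfolding Dd_def using prodY by simp
    then show ?thesis using E1 LI1 C by simp
  qed
qed


no_notation fps_nth (infixl \<open>$\<close> 75)
notation vec_index (infixl \<open>$\<close> 100)

lemma det_zero_row':
  assumes A: "A \<in> carrier_mat n n" and k: "k < n" and z: "\<And>j. j < n \<Longrightarrow> A $$ (k, j) = 0"
  shows "det A = 0"
  unfolding det_def'[OF A]
proof (rule sum.neutral, rule ballI)
  fix p assume "p \<in> {p. p permutes {0..<n}}"
  then have "p k < n" using k permutes_in_image[of p "{0..<n}" k] by auto
  then have "A $$ (k, p k) = 0" using z by simp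
  then have "(\<Prod>i = 0..<n. A $$ (i, p i)) = 0" using k by (intro prod_zero) auto
  then show "signof p * (\<Prod>i = 0..<n. A $$ (i, p i)) = 0" by simp
qed

lemma det_zero_col':
  assumes A: "A \<in> carrier_mat n n" and k: "k < n" and z: "\<And>i. i < n \<Longrightarrow> A $$ (i, k) = 0"
  shows "det A = 0"
proof -
  have "det A = det (transpose_mat A)" using det_transpose[OF A] by simp
  also have "\<dots> = 0"
    by (rule det_zero_row'[of _ n k]) (use A k z in auto)
  finally show ?thesis .
qed

lemma mat_prod_sum:
  "mat n K (\<lambda>(i, u). A i u) * mat K n (\<lambda>(u, j). B u j) = mat n n (\<lambda>(i, j). \<Sum>u<K. A i u * B u j)"
  by (rule eq_matI) (auto simp: scalar_prod_def atLeast0LessThan)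

lemma det_sum_prod_N:
  "det (mat N N (\<lambda>(i, j). \<Sum>u<N. A i u * B u j)) = det (mat N N (\<lambda>(i, u). A i u)) * det (mat N N (\<lambda>(u, j). B u j))"
  using det_mult[of "mat N N (\<lambda>(i, u). A i u)" N "mat N N (\<lambda>(u, j). B u j)"]
  by (simp add: mat_prod_sum)

lemma det_sum_prod_less:
  assumes K: "K < N"
  shows "det (mat N N (\<lambda>(i, j). \<Sum>u<K. A i u * B u j)) = 0"
proof -
  let ?A = "\<lambda>i u. if u < K then A i u else 0"
  let ?B = "\<lambda>u j. if u < K then B u j else 0"
  have "mat N N (\<lambda>(i, j). \<Sum>u<K. A i u * B u j) = mat N N (\<lambda>(i, j). \<Sum>u<N. ?A i u * ?B u j)"
  proof (rule eq_matI)
    fix i j assume "i < dim_row (mat N N (\<lambda>(i, j). \<Sum>u<N. ?A i u * ?B u j))"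
      "j < dim_col (mat N N (\<lambda>(i, j). \<Sum>u<N. ?A i u * ?B u j))"
    then have ij: "i < N" "j < N" by auto
    have "(\<Sum>u<N. ?A i u * ?B u j) = (\<Sum>u<K. A i u * B u j)"
      by (rule sum.mono_neutral_cong_right) (use K in auto)
    then show "mat N N (\<lambda>(i, j). \<Sum>u<K. A i u * B u j) $$ (i, j) = mat N N (\<lambda>(i, j). \<Sum>u<N. ?A i u * ?B u j) $$ (i, j)"
      using ij by simp
  qed auto
  also have "det \<dots> = det (mat N N (\<lambda>(i, u). ?A i u)) * det (mat N N (\<lambda>(u, j). ?B u j))"
    by (rule det_sum_prod_N)
  also have "det (mat N N (\<lambda>(i, u). ?A i u)) = 0"
    by (rule det_zero_col'[of _ N "N - 1"]) (use K in auto)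
  finally show ?thesis by simp
qed

lemma det_low_rank:
  assumes mN: "m \<le> N" and Sn: "S \<subseteq> {..<n::nat}" and cS: "card S < m"
    and supp: "\<And>i u. i < m \<Longrightarrow> u < n \<Longrightarrow> u \<notin> S \<Longrightarrow> R i u = 0"
  shows "det (mat N N (\<lambda>(i, j). \<Sum>u<n. R i u * V u j)) = 0"
proof -
  define ss where "ss = sorted_list_of_set S"
  define s where "s = card S"
  have fS: "finite S" using Sn finite_subset by blast
  have lss: "length ss = s" unfolding ss_def s_def by simp
  have dss: "distinct ss" unfolding ss_def by simp
  have sss: "set ss = S" unfolding ss_def using fS by simp
  define K where "K = s + (N - m)"
  have K: "K < N" unfolding K_def s_def using cS mN by simp
  define A where "A = (\<lambda>i u. if u < s then R i (ss ! u) else if i = m + (u - s) then 1 else 0)"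
  define B where "B = (\<lambda>u j. if u < s then V (ss ! u) j else (\<Sum>l\<in>{..<n} - S. R (m + (u - s)) l * V l j))"
  have eq: "(\<Sum>u<n. R i u * V u j) = (\<Sum>u<K. A i u * B u j)" if i: "i < N" for i j
  proof -
    have split: "(\<Sum>u<n. R i u * V u j) = (\<Sum>u\<in>S. R i u * V u j) + (\<Sum>u\<in>{..<n} - S. R i u * V u j)"
      using Sn by (metis (no_types, lifting) finite_lessThan sum.subset_diff add.commute)
    have p1: "(\<Sum>u\<in>S. R i u * V u j) = (\<Sum>u<s. A i u * B u j)"
    proof -
      have "(\<Sum>u\<in>S. R i u * V u j) = (\<Sum>u<s. R i (ss ! u) * V (ss ! u) j)"
        unfolding sss[symmetric] using dss lss
        by (simp add: sum.distinct_set_conv_list sum_list_sum_nth atLeast0LessThan)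
      also have "\<dots> = (\<Sum>u<s. A i u * B u j)"
        by (rule sum.cong) (auto simp: A_def B_def)
      finally show ?thesis .
    qed
    have p2: "(\<Sum>u\<in>{..<n} - S. R i u * V u j) = (\<Sum>u\<in>{s..<K}. A i u * B u j)"
    proof (cases "i < m")
      case True
      have "(\<Sum>u\<in>{..<n} - S. R i u * V u j) = 0" using supp[OF True] by (intro sum.neutral) auto
      moreover have "(\<Sum>u\<in>{s..<K}. A i u * B u j) = 0" using True by (intro sum.neutral) (auto simp: A_def)
      ultimately show ?thesis by simp
    next
      case False
      let ?u = "s + (i - m)"
      have uK: "?u \<in> {s..<K}" using False i by (auto simp: K_def)
      have "(\<Sum>u\<in>{s..<K}. A i u * B u j) = A i ?u * B ?u j"
        by (rule sum.remove[OF _ uK, THEN trans]) (use False in \<open>auto intro!: sum.neutral simp: A_def split: if_split_asm\<close>)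
      also have "\<dots> = (\<Sum>l\<in>{..<n} - S. R i l * V l j)"
        using False by (simp add: A_def B_def)
      finally show ?thesis by simp
    qed
    have "{..<K} = {..<s} \<union> {s..<K}" "{..<s} \<inter> {s..<K} = {}" by (auto simp: K_def)
    then have "(\<Sum>u<K. A i u * B u j) = (\<Sum>u<s. A i u * B u j) + (\<Sum>u\<in>{s..<K}. A i u * B u j)"
      by (simp add: sum.union_disjoint)
    then show ?thesis using split p1 p2 by simp
  qed
  have "mat N N (\<lambda>(i, j). \<Sum>u<n. R i u * V u j) = mat N N (\<lambda>(i, j). \<Sum>u<K. A i u * B u j)"
    by (rule eq_matI) (auto simp: eq)
  then show ?thesis using det_sum_prod_less[OF K] by simp
qed

lemma det_lower_tri:
  assumes "\<And>i j. i < j \<Longrightarrow> j < N \<Longrightarrow> f i j = 0"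
  shows "det (mat N N (\<lambda>(i, j). f i j)) = (\<Prod>i<N. f i i)"
proof -
  have "det (mat N N (\<lambda>(i, j). f i j)) = prod_list (diag_mat (mat N N (\<lambda>(i, j). f i j)))"
    by (rule det_lower_triangular[of N]) (use assms in auto)
  also have "\<dots> = (\<Prod>i<N. f i i)"
    by (simp add: diag_mat_def prod.distinct_set_conv_list[symmetric] atLeast0LessThan comp_def)
  finally show ?thesis .
qed


definition psipoly :: "(int \<Rightarrow> complex) \<Rightarrow> nat \<Rightarrow> complex poly" where
  "psipoly a j = (\<Prod>w\<in>{1 - int j..0}. [:- a w, 1:])"

lemma poly_psipoly: "poly (psipoly a j) z = psi a j z"
  by (simp add: psipoly_def psi_def poly_prod)

lemma degree_psipoly: "degree (psipoly a j) = j"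
proof -
  have "degree (psipoly a j) = (\<Sum>w\<in>{1 - int j..0}. degree [:- a w, 1:])"
    unfolding psipoly_def by (rule degree_prod_eq_sum_degree) auto
  also have "\<dots> = j" by simp
  finally show ?thesis .
qed

lemma lead_psipoly: "coeff (psipoly a j) j = 1"
proof -
  have "lead_coeff (psipoly a j) = 1"
    unfolding psipoly_def lead_coeff_prod by simp
  then show ?thesis using degree_psipoly[of a j] by simp
qed

lemma det_psi_nz:
  assumes inj: "inj_on zf {..<N}"
  shows "det (mat N N (\<lambda>(u, j). psi a j (zf u))) \<noteq> 0"
proof
  let ?M = "mat N N (\<lambda>(u, j). psi a j (zf u))"
  assume "det ?M = 0"
  then obtain v where v: "v \<in> carrier_vec N" "v \<noteq> 0\<^sub>v N" "?M *\<^sub>v v = 0\<^sub>v N"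
    using det_0_iff_vec_prod_zero[of ?M N] by auto
  define G where "G = (\<Sum>j<N. smult (v $ j) (psipoly a j))"
  have dv: "dim_vec v = N" using v(1) by simp
  have roots: "poly G (zf u) = 0" if u: "u < N" for u
  proof -
    have "(?M *\<^sub>v v) $ u = 0" using v(3) u by simp
    moreover have "(?M *\<^sub>v v) $ u = (\<Sum>j<N. psi a j (zf u) * v $ j)"
      using u dv by (simp add: scalar_prod_def atLeast0LessThan)
    moreover have "poly G (zf u) = (\<Sum>j<N. v $ j * psi a j (zf u))"
      by (simp add: G_def poly_sum poly_psipoly)
    ultimately show ?thesis by (simp add: mult.commute)
  qed
  have "\<exists>j<N. v $ j \<noteq> 0"
  proof (rule ccontr)
    assume "\<not> (\<exists>j<N. v $ j \<noteq> 0)"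
    then have "v = 0\<^sub>v N" using dv by (intro eq_vecI) auto
    then show False using v(2) by simp
  qed
  then obtain j0 where j0: "j0 < N" "v $ j0 \<noteq> 0" by blast
  define J where "J = Max {j. j < N \<and> v $ j \<noteq> 0}"
  have fin: "finite {j. j < N \<and> v $ j \<noteq> 0}" by simp
  have Jin: "J \<in> {j. j < N \<and> v $ j \<noteq> 0}" unfolding J_def
    by (rule Max_in[OF fin]) (use j0 in auto)
  have Jmax: "\<And>j. j < N \<Longrightarrow> v $ j \<noteq> 0 \<Longrightarrow> j \<le> J" unfolding J_def
    using Max_ge[OF fin] by auto
  have cG: "coeff G J = v $ J"
  proof -
    have "coeff G J = (\<Sum>j<N. v $ j * coeff (psipoly a j) J)"
      by (simp add: G_def coeff_sum)
    also have "\<dots> = v $ J * coeff (psipoly a J) J + (\<Sum>j\<in>{..<N} - {J}. v $ j * coeff (psipoly a j) J)"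
      by (rule sum.remove) (use Jin in auto)
    also have "(\<Sum>j\<in>{..<N} - {J}. v $ j * coeff (psipoly a j) J) = 0"
    proof (rule sum.neutral, rule ballI)
      fix j assume j: "j \<in> {..<N} - {J}"
      show "v $ j * coeff (psipoly a j) J = 0"
      proof (cases "j < J")
        case True
        then have "coeff (psipoly a j) J = 0" by (intro coeff_eq_0) (simp add: degree_psipoly)
        then show ?thesis by simp
      next
        case False
        then have "j > J" using j by auto
        then have "v $ j = 0" using Jmax j by force
        then show ?thesis by simp
      qed
    qed
    finally show ?thesis by (simp add: lead_psipoly)
  qed
  have G0: "G \<noteq> 0" using cG Jin by auto
  have degG: "degree G \<le> N - 1"
    unfolding G_def
  proof (rule degree_sum_le)
    fix j assume "j \<in> {..<N}"
    then show "degree (smult (v $ j) (psipoly a j)) \<le> N - 1"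
      using degree_smult_le[of "v $ j" "psipoly a j"] by (simp add: degree_psipoly)
  qed simp
  have sub: "zf ` {..<N} \<subseteq> {x. poly G x = 0}" using roots by auto
  have "N = card (zf ` {..<N})" using inj by (simp add: card_image)
  also have "\<dots> \<le> card {x. poly G x = 0}"
    by (rule card_mono[OF poly_roots_finite[OF G0] sub])
  also have "\<dots> \<le> degree G" by (rule card_poly_roots_bound[OF G0])
  finally show False using degG j0 by simp
qed


section \<open>Combinatorics of partitions\<close>

lemma conjp_filter: "conjp l c = length (filter (\<lambda>i. c \<le> l ! i) [0..<length l])"
proof -
  have "l = map (\<lambda>i. l ! i) [0..<length l]" by (simp add: map_nth)
  then have "filter (\<lambda>p. c \<le> p) l = filter (\<lambda>p. c \<le> p) (map (\<lambda>i. l ! i) [0..<length l])"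
    by simp
  also have "\<dots> = map (\<lambda>i. l ! i) (filter ((\<lambda>p. c \<le> p) \<circ> (\<lambda>i. l ! i)) [0..<length l])"
    by (rule filter_map)
  finally have "filter (\<lambda>p. c \<le> p) l = map (\<lambda>i. l ! i) (filter (\<lambda>i. c \<le> l ! i) [0..<length l])"
    by (simp add: comp_def)
  then show ?thesis unfolding conjp_def by simp
qed

lemma conjp_iff:
  assumes lp: "is_partition l"
  shows "i < conjp l c \<longleftrightarrow> i < length l \<and> c \<le> l ! i"
proof -
  let ?P = "\<lambda>i. c \<le> l ! i"
  have dc: "\<And>i j. i \<le> j \<Longrightarrow> j < length l \<Longrightarrow> ?P j \<Longrightarrow> ?P i"
    using part_mono[OF lp] le_trans by blast
  have e: "filter ?P [0..<length l] = [0..<conjp l c]"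
    unfolding conjp_filter by (rule filter_upt_down[OF dc])
  have "i < conjp l c \<longleftrightarrow> i \<in> set (filter ?P [0..<length l])"
    unfolding e by simp
  also have "\<dots> \<longleftrightarrow> i < length l \<and> ?P i" by simp
  finally show ?thesis .
qed

lemma conjp_eqI:
  assumes lp: "is_partition l" and h: "\<And>i. i < length l \<and> c \<le> l ! i \<longleftrightarrow> i < v"
  shows "conjp l c = v"
proof -
  have h2: "\<And>i. i < conjp l c \<longleftrightarrow> i < v" using conjp_iff[OF lp] h by simp
  show ?thesis
  proof (rule ccontr)
    assume "conjp l c \<noteq> v"
    then have "conjp l c < v \<or> v < conjp l c" by arith
    then show False using h2[of "conjp l c"] h2[of v] by auto
  qed
qed

lemma qt_nonneg:
  assumes lp: "is_partition l" and t: "t < dlen l"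
  shows "qt l t \<ge> 0"
proof -
  have tl: "t < length l" "t + 1 \<le> l ! t" using dlen_iff[OF lp] t by auto
  have "t < conjp l (t + 1)" using conjp_iff[OF lp] tl by simp
  then show ?thesis unfolding qt_def by simp
qed

lemma conjp_anti:
  assumes lp: "is_partition l" and "c \<le> c'"
  shows "conjp l c' \<le> conjp l c"
proof -
  have h: "\<And>i. i < conjp l c' \<Longrightarrow> i < conjp l c" using conjp_iff[OF lp] assms(2) by auto
  show ?thesis
  proof (rule ccontr)
    assume "\<not> conjp l c' \<le> conjp l c"
    then have "conjp l c < conjp l c'" by simp
    then show False using h[of "conjp l c"] by simp
  qed
qed

lemma qt_strict:
  assumes lp: "is_partition l" and "t < t'"
  shows "qt l t' < qt l t"
  using conjp_anti[OF lp, of "t + 1" "t' + 1"] assms(2) unfolding qt_def by simp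

definition qlow :: "nat list \<Rightarrow> nat \<Rightarrow> int" where
  "qlow l v = int v - int (l ! v)"

lemma low_row:
  assumes lp: "is_partition l" and "dlen l \<le> v" "v < length l"
  shows "l ! v \<le> v"
  using dlen_iff[OF lp, of v] assms by simp

lemma qlow_nonneg:
  assumes lp: "is_partition l" and "dlen l \<le> v" "v < length l"
  shows "qlow l v \<ge> 0"
  using low_row[OF assms] unfolding qlow_def by simp

lemma qlow_strict:
  assumes lp: "is_partition l" and "v < v'" "v' < length l"
  shows "qlow l v < qlow l v'"
  using part_mono[OF lp, of v v'] assms unfolding qlow_def by simp

lemma maya_disj:
  assumes lp: "is_partition l" and v: "dlen l \<le> v" "v < length l" and t: "t < dlen l"
  shows "qlow l v \<noteq> qt l t"
proof
  assume e: "qlow l v = qt l t"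
  let ?c = "t + 1"
  let ?K = "conjp l ?c"
  have e': "int v - int (l ! v) = int ?K - int ?c" using e unfolding qlow_def qt_def by simp
  show False
  proof (cases "?c \<le> l ! v")
    case True
    then have "v < ?K" using conjp_iff[OF lp] v by simp
    then show False using e' True by simp
  next
    case False
    then have "\<not> v < ?K" using conjp_iff[OF lp] v by simp
    then show False using e' False by simp
  qed
qed

lemma maya_cover:
  assumes lp: "is_partition l" and i: "dlen l \<le> i" "i < length l"
    and q: "0 \<le> q" "q \<le> qlow l i"
  shows "(\<exists>t<dlen l. qt l t = q) \<or> (\<exists>v. dlen l \<le> v \<and> v \<le> i \<and> qlow l v = q)"
proof -
  let ?d = "dlen l"
  let ?Vs = "{v. ?d \<le> v \<and> v \<le> i \<and> q \<le> qlow l v}"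
  have iV: "i \<in> ?Vs" using i q by simp
  have fV: "finite ?Vs" by (rule finite_subset[of _ "{..i}"]) auto
  define v where "v = Min ?Vs"
  have vV: "v \<in> ?Vs" unfolding v_def by (rule Min_in[OF fV]) (use iV in auto)
  have vmin: "\<And>w. w \<in> ?Vs \<Longrightarrow> v \<le> w" unfolding v_def using Min_le[OF fV] by auto
  have vd: "?d \<le> v" "v \<le> i" "q \<le> qlow l v" using vV by auto
  have vl: "v < length l" using vd i by simp
  show ?thesis
  proof (cases "qlow l v = q")
    case True
    then show ?thesis using vd by blast
  next
    case False
    then have gt: "q < qlow l v" using vd by simp
    define c where "c = nat (int v - q)"
    have lv_pos: "l ! v \<ge> 1" using part_pos[OF lp vl] by simp
    have lv_c: "int (l ! v) < int v - q" using gt unfolding qlow_def by simp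
    have c_int: "int c = int v - q" unfolding c_def using lv_c lv_pos by simp
    have c1: "c \<ge> 1" using c_int lv_c lv_pos by simp
    have cv: "c \<le> v" using c_int q by simp
    have below: "c \<le> l ! i'" if i': "i' < v" for i'
    proof (cases "?d < v")
      case True
      have v1: "v - 1 \<notin> ?Vs" using vmin[of "v - 1"] True by (cases v) auto
      have "qlow l (v - 1) < q" using v1 True vd by auto
      then have "int (v - 1) - int (l ! (v - 1)) < q" unfolding qlow_def .
      then have "c \<le> l ! (v - 1)" using c_int True by simp
      moreover have "l ! (v - 1) \<le> l ! i'" using part_mono[OF lp, of i' "v - 1"] i' vl by simp
      ultimately show ?thesis by simp
    next
      case False
      then have vd': "v = ?d" using vd by simp
      then have "?d \<ge> 1" using cv c1 by simp
      then have "?d - 1 < ?d" by simp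
      then have "?d \<le> l ! (?d - 1)" using dlen_iff[OF lp, of "?d - 1"] \<open>?d \<ge> 1\<close> by simp
      moreover have "l ! (?d - 1) \<le> l ! i'" using part_mono[OF lp, of i' "?d - 1"] i' vl vd' by simp
      ultimately show ?thesis using cv vd' by simp
    qed
    have above: "l ! i' < c" if i': "v \<le> i'" "i' < length l" for i'
    proof -
      have "l ! i' \<le> l ! v" using part_mono[OF lp] i' by simp
      then show ?thesis using lv_c c_int by simp
    qed
    have cj: "conjp l c = v"
    proof (rule conjp_eqI[OF lp])
      fix i'
      show "i' < length l \<and> c \<le> l ! i' \<longleftrightarrow> i' < v"
      proof
        assume a: "i' < length l \<and> c \<le> l ! i'"
        show "i' < v"
        proof (rule ccontr)
          assume "\<not> i' < v"
          then have "l ! i' < c" using above a by simp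
          then show False using a by simp
        qed
      next
        assume a: "i' < v"
        then show "i' < length l \<and> c \<le> l ! i'" using below[OF a] vl by simp
      qed
    qed
    define t where "t = c - 1"
    have tc: "t + 1 = c" using c1 unfolding t_def by simp
    have tv: "t < v" using tc cv by simp
    have td: "t < ?d"
      using dlen_iff[OF lp, of t] below[OF tv] tc tv vl by simp
    have "qt l t = q" unfolding qt_def tc cj using c_int by simp
    then show ?thesis using td by blast
  qed
qed

lemma not_subdiag_viol:
  assumes mp: "is_partition mu" and "\<not> subdiag mu l"
  shows "\<exists>r<length mu. (if r < length l then l ! r else 0) < mu ! r"
proof (cases "length mu \<le> length l")
  case True
  then obtain i where "i < length mu" "\<not> mu ! i \<le> l ! i"
    using assms(2) unfolding subdiag_def by auto
  then show ?thesis using True by (intro exI[of _ i]) auto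
next
  case False
  then have "length l < length mu" by simp
  then show ?thesis using part_pos[OF mp] by (intro exI[of _ "length l"]) auto
qed


definition zl :: "(int \<Rightarrow> complex) \<Rightarrow> nat list \<Rightarrow> nat \<Rightarrow> complex list" where
  "zl a l N = xpt a l @ map (\<lambda>q. a (- int q)) [0..<N+1]"

lemma zl_len: "length (zl a l N) = dlen l + N + 1"
  by (simp add: zl_def)

lemma zl_set: "set (zl a l N) = Zset a l N"
proof -
  have "(\<lambda>q. a (- int q)) ` {0..<N+1} = a ` {- int N..0}"
  proof (intro equalityI subsetI)
    fix z assume "z \<in> (\<lambda>q. a (- int q)) ` {0..<N+1}"
    then show "z \<in> a ` {- int N..0}" by auto
  next
    fix z assume "z \<in> a ` {- int N..0}"
    then obtain w where w: "w \<in> {- int N..0}" "z = a w" by blast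
    then have "nat (- w) \<in> {0..<N+1}" "z = a (- int (nat (- w)))" by auto
    then show "z \<in> (\<lambda>q. a (- int q)) ` {0..<N+1}" by blast
  qed
  moreover have "set (zl a l N) = set (xpt a l) \<union> (\<lambda>q. a (- int q)) ` {0..<N+1}"
    by (simp only: zl_def set_append set_map set_upt)
  ultimately show ?thesis by (simp add: Zset_def)
qed

lemma zl_distinct:
  assumes inj: "inj a" and lp: "is_partition l"
  shows "distinct (zl a l N)"
proof -
  have d1: "distinct (xpt a l)" by (rule distinct_xpt[OF inj lp])
  have "inj_on (\<lambda>q. a (- int q)) {0..<N+1}"
    by (rule inj_onI) (use inj in \<open>auto simp: inj_eq\<close>)
  then have d2: "distinct (map (\<lambda>q. a (- int q)) [0..<N+1])"
    by (simp only: distinct_map distinct_upt set_upt)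
  have "set (zl a l N) = set (xpt a l) \<union> set (map (\<lambda>q. a (- int q)) [0..<N+1])"
    by (simp only: zl_def set_append)
  have e: "(\<lambda>q. a (- int q)) ` {0..<N+1} = a ` {- int N..0}"
  proof (intro equalityI subsetI)
    fix z assume "z \<in> (\<lambda>q. a (- int q)) ` {0..<N+1}"
    then show "z \<in> a ` {- int N..0}" by auto
  next
    fix z assume "z \<in> a ` {- int N..0}"
    then obtain w where w: "w \<in> {- int N..0}" "z = a w" by blast
    then have "nat (- w) \<in> {0..<N+1}" "z = a (- int (nat (- w)))" by auto
    then show "z \<in> (\<lambda>q. a (- int q)) ` {0..<N+1}" by blast
  qed
  have "set (map (\<lambda>q. a (- int q)) [0..<N+1]) = a ` {- int N..0}"
    by (simp only: set_map set_upt e)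
  then have dj: "set (xpt a l) \<inter> set (map (\<lambda>q. a (- int q)) [0..<N+1]) = {}"
    using Zset_props(3)[OF inj lp] by simp
  show ?thesis unfolding zl_def distinct_append using d1 d2 dj by blast
qed

lemma zl_nth_x: "u < dlen l \<Longrightarrow> zl a l N ! u = a (int (l ! u) - int u)"
  by (simp add: zl_def nth_append xpt_nth)

lemma zl_nth_a: "q \<le> N \<Longrightarrow> zl a l N ! (dlen l + q) = a (- int q)"
  by (simp add: zl_def nth_append)

lemma sum_zl:
  assumes inj: "inj a" and lp: "is_partition l"
  shows "(\<Sum>z\<in>Zset a l N. g z) = (\<Sum>u<dlen l + N + 1. g (zl a l N ! u))"
proof -
  have "(\<Sum>z\<in>Zset a l N. g z) = sum_list (map g (zl a l N))"
    unfolding zl_set[symmetric] by (rule sum.distinct_set_conv_list[OF zl_distinct[OF inj lp]])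
  also have "\<dots> = (\<Sum>u<dlen l + N + 1. g (zl a l N ! u))"
    by (simp add: sum_list_sum_nth zl_len atLeast0LessThan)
  finally show ?thesis .
qed

lemma num_zero1: "t < dlen l \<Longrightarrow> num a l N P (a (- qt l t)) = 0"
  unfolding num_def by (subst prod_zero[of "{..<dlen l}"]) auto

lemma num_zero2: "w \<in> {1..P} \<Longrightarrow> num a l N P (a w) = 0"
  unfolding num_def by (subst prod_zero[of "{1..P}"]) auto

lemma num_zero3: "w \<in> {- int N..min 0 P} \<Longrightarrow> num a l N P (a w) = 0"
  unfolding num_def by (subst prod_zero[of "{- int N..min 0 P}"]) auto

lemma num_nz:
  assumes inj: "inj a" and "w \<notin> {1..P}" "w \<notin> {- int N..min 0 P}" "\<And>t. t < dlen l \<Longrightarrow> w \<noteq> - qt l t"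
  shows "num a l N P (a w) \<noteq> 0"
  unfolding num_def using assms by (auto simp: inj_eq)

definition Pm :: "nat list \<Rightarrow> nat \<Rightarrow> int" where
  "Pm mu i = int (mu ! i) - int i - 1"

definition Rf :: "(int \<Rightarrow> complex) \<Rightarrow> nat list \<Rightarrow> nat list \<Rightarrow> nat \<Rightarrow> nat \<Rightarrow> complex" where
  "Rf a l mu i u = num a l (length mu) (Pm mu i) (zl a l (length mu) ! u) / den (Zset a l (length mu)) (zl a l (length mu) ! u)"

definition Vf :: "(int \<Rightarrow> complex) \<Rightarrow> nat list \<Rightarrow> nat \<Rightarrow> nat \<Rightarrow> nat \<Rightarrow> complex" where
  "Vf a l N u j = psi a j (zl a l N ! u)"

lemma entry_form:
  assumes inj: "inj a" and lp: "is_partition l" and mp: "is_partition mu" and i: "i < length mu"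
  shows "evalL (hshift (int (mu ! i) - int i + int j) (shiftseq (- int j) a)) (xpt a l) (ypt a l) =
    (\<Sum>u<dlen l + length mu + 1. Rf a l mu i u * Vf a l (length mu) u j)"
proof -
  let ?N = "length mu"
  have P: "Pm mu i \<ge> - int ?N" using i unfolding Pm_def by simp
  have k: "int (mu ! i) - int i + int j = Pm mu i + 1 + int j" unfolding Pm_def by simp
  show ?thesis
    unfolding k KL[OF inj lp P] sum_zl[OF inj lp] Rf_def Vf_def
    by (rule sum.cong) (auto simp: algebra_simps)
qed

lemma eval_schurA:
  assumes inj: "inj a" and lp: "is_partition l" and mp: "is_partition mu"
  shows "evalL (schurA mu a) (xpt a l) (ypt a l) =
    det (mat (length mu) (length mu) (\<lambda>(i, j). \<Sum>u<dlen l + length mu + 1. Rf a l mu i u * Vf a l (length mu) u j))"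
proof -
  let ?N = "length mu"
  have "evalL (schurA mu a) (xpt a l) (ypt a l) =
     det (map_mat (\<lambda>f. evalL f (xpt a l) (ypt a l)) (mat ?N ?N
       (\<lambda>(i, j). hshift (int (mu ! i) - int i + int j) (shiftseq (- int j) a))))"
    unfolding schurA_def by (rule evalL_det)
  also have "map_mat (\<lambda>f. evalL f (xpt a l) (ypt a l)) (mat ?N ?N
       (\<lambda>(i, j). hshift (int (mu ! i) - int i + int j) (shiftseq (- int j) a))) =
     mat ?N ?N (\<lambda>(i, j). \<Sum>u<dlen l + ?N + 1. Rf a l mu i u * Vf a l ?N u j)"
    by (rule eq_matI) (auto simp: entry_form[OF inj lp mp])
  finally show ?thesis .
qed


lemma Rf_zero: "num a l (length mu) (Pm mu i) (zl a l (length mu) ! u) = 0 \<Longrightarrow> Rf a l mu i u = 0"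
  by (simp add: Rf_def)

lemma a_col:
  assumes "dlen l \<le> u" "u < dlen l + N + 1"
  shows "\<exists>q\<le>N. u = dlen l + q \<and> zl a l N ! u = a (- int q)"
proof -
  obtain q where q: "u = dlen l + q" using assms(1) le_Suc_ex by blast
  then have "q \<le> N" using assms(2) by simp
  then show ?thesis using q zl_nth_a by blast
qed

theorem vanish:
  assumes inj: "inj a" and lp: "is_partition l" and mp: "is_partition mu" and ns: "\<not> subdiag mu l"
  shows "evalL (schurA mu a) (xpt a l) (ypt a l) = 0"
proof -
  let ?N = "length mu" and ?d = "dlen l"
  let ?n = "?d + ?N + 1"
  obtain r where r: "r < ?N" and viol: "(if r < length l then l ! r else 0) < mu ! r"
    using not_subdiag_viol[OF mp ns] by blast
  define lr where "lr = (if r < length l then l ! r else 0)"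
  have lr_mu: "lr < mu ! r" using viol unfolding lr_def .
  have mu_ge: "\<And>i. i \<le> r \<Longrightarrow> mu ! r \<le> mu ! i" using part_mono[OF mp] r by simp
  have "det (mat ?N ?N (\<lambda>(i, j). \<Sum>u<?n. Rf a l mu i u * Vf a l ?N u j)) = 0"
  proof (cases "r \<le> lr")
    case True
    define S where "S = {u. u < r \<and> u < ?d}"
    show ?thesis
    proof (rule det_low_rank[of "r + 1" ?N S ?n])
      show "r + 1 \<le> ?N" using r by simp
      show "S \<subseteq> {..<?n}" unfolding S_def by auto
      have "S \<subseteq> {..<r}" unfolding S_def by auto
      then have "card S \<le> r" using card_mono[of "{..<r}" S] by simp
      then show "card S < r + 1" by simp
    next
      fix i u assume i: "i < r + 1" and u: "u < ?n" and uS: "u \<notin> S"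
      have Pi: "Pm mu i \<ge> int lr - int r" using mu_ge[of i] i lr_mu unfolding Pm_def by simp
      have Pi0: "Pm mu i \<ge> 0" using Pi True by simp
      show "Rf a l mu i u = 0"
      proof (cases "u < ?d")
        case True
        then have ur: "r \<le> u" using uS unfolding S_def by auto
        have ul: "u < length l" using True dlen_le[of l] by simp
        have rl: "r < length l" using ur ul by simp
        have "l ! u \<le> l ! r" using part_mono[OF lp ur ul] .
        then have w1: "int (l ! u) - int u \<le> Pm mu i" using Pi ur rl unfolding lr_def by simp
        have w2: "int (l ! u) - int u \<ge> 1" using xpt_idx[OF lp True] .
        show ?thesis
          by (rule Rf_zero) (use zl_nth_x[OF True] num_zero2 w1 w2 in auto)
      next
        case False
        then obtain q where q: "q \<le> ?N" "zl a l ?N ! u = a (- int q)"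
          using a_col[of l u ?N a] u by auto
        have "- int q \<in> {- int ?N..min 0 (Pm mu i)}" using q Pi0 by simp
        then show ?thesis by (intro Rf_zero) (simp add: q num_zero3)
      qed
    qed
  next
    case False
    then have lr_r: "lr < r" by simp
    define Qs where "Qs = (\<lambda>t. nat (qt l t)) ` {lr..<?d}"
    define S where "S = {..<?d} \<union> (\<lambda>q. ?d + q) ` ({..<r - lr} - Qs)"
    have conj_c: "conjp l (lr + 1) \<le> r"
    proof (rule ccontr)
      assume "\<not> conjp l (lr + 1) \<le> r"
      then have "r < conjp l (lr + 1)" by simp
      then have "r < length l" "lr + 1 \<le> l ! r" using conjp_iff[OF lp] by auto
      then show False unfolding lr_def by simp
    qed
    have Qs_range: "0 \<le> qt l t \<and> qt l t < int r - int lr" if t: "t \<in> {lr..<?d}" for t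
    proof -
      have td: "t < ?d" using t by simp
      have "conjp l (t + 1) \<le> conjp l (lr + 1)" using conjp_anti[OF lp, of "lr + 1" "t + 1"] t by simp
      then have "conjp l (t + 1) \<le> r" using conj_c by simp
      then show ?thesis using qt_nonneg[OF lp td] t unfolding qt_def by simp
    qed
    have Qs_sub: "Qs \<subseteq> {..<r - lr}"
      unfolding Qs_def using Qs_range by force
    have Qs_inj: "inj_on (\<lambda>t. nat (qt l t)) {lr..<?d}"
    proof (rule inj_onI)
      fix t t' assume t: "t \<in> {lr..<?d}" and t': "t' \<in> {lr..<?d}" and e: "nat (qt l t) = nat (qt l t')"
      have "qt l t = qt l t'" using e Qs_range[OF t] Qs_range[OF t'] eq_nat_nat_iff by blast
      then show "t = t'" using qt_strict[OF lp, of t t'] qt_strict[OF lp, of t' t]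
        by (metis less_irrefl linorder_neqE_nat)
    qed
    have cQs: "card Qs = ?d - lr" unfolding Qs_def using card_image[OF Qs_inj] by simp
    have cdiff: "card ({..<r - lr} - Qs) = (r - lr) - (?d - lr)"
      using card_Diff_subset[OF finite_subset[OF Qs_sub] Qs_sub] cQs by simp
    have cS: "card S \<le> ?d + ((r - lr) - (?d - lr))"
    proof -
      have "card S \<le> card {..<?d} + card ((\<lambda>q. ?d + q) ` ({..<r - lr} - Qs))"
        unfolding S_def by (rule card_Un_le)
      also have "card ((\<lambda>q. ?d + q) ` ({..<r - lr} - Qs)) \<le> card ({..<r - lr} - Qs)"
        by (rule card_image_le) simp
      finally show ?thesis using cdiff by simp
    qed
    have cS': "card S \<le> r"
    proof (cases "lr \<le> ?d")
      case True
      have "?d - lr \<le> r - lr" using cQs card_mono[OF _ Qs_sub] by simp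
      then show ?thesis using cS True lr_r by simp
    next
      case False
      then show ?thesis using cS lr_r by simp
    qed
    show ?thesis
    proof (rule det_low_rank[of "r + 1" ?N S ?n])
      show "r + 1 \<le> ?N" using r by simp
      show "S \<subseteq> {..<?n}" unfolding S_def using r by auto
      show "card S < r + 1" using cS' by simp
    next
      fix i u assume i: "i < r + 1" and u: "u < ?n" and uS: "u \<notin> S"
      have Pi: "Pm mu i \<ge> int lr - int r" using mu_ge[of i] i lr_mu unfolding Pm_def by simp
      have ud: "?d \<le> u" using uS unfolding S_def by auto
      obtain q where q: "q \<le> ?N" "u = ?d + q" "zl a l ?N ! u = a (- int q)"
        using a_col[OF ud u] by blast
      have qS: "q \<notin> {..<r - lr} - Qs" using uS q(2) unfolding S_def by auto
      show "Rf a l mu i u = 0"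
      proof (cases "q \<in> Qs")
        case True
        then obtain t where t: "t \<in> {lr..<?d}" "q = nat (qt l t)" unfolding Qs_def by blast
        then have "- int q = - qt l t" using Qs_range[OF t(1)] by simp
        then show ?thesis using t num_zero1[of t l a ?N "Pm mu i"]
          by (intro Rf_zero) (simp add: q(3))
      next
        case False
        then have "q \<ge> r - lr" using qS by simp
        then have "- int q \<in> {- int ?N..min 0 (Pm mu i)}" using q(1) Pi lr_r by simp
        then have "num a l ?N (Pm mu i) (a (- int q)) = 0" by (rule num_zero3)
        then show ?thesis using q(3) by (intro Rf_zero) simp
      qed
    qed
  qed
  then show ?thesis using eval_schurA[OF inj lp mp] by simp
qed


theorem nonvanish:
  assumes inj: "inj a" and lp: "is_partition l"
  shows "evalL (schurA l a) (xpt a l) (ypt a l) \<noteq> 0"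
proof -
  let ?N = "length l" and ?d = "dlen l"
  let ?n = "?d + ?N + 1"
  let ?Z = "Zset a l ?N"
  define col where "col v = (if v < ?d then v else ?d + nat (qlow l v))" for v
  have dN: "?d \<le> ?N" by (rule dlen_le)
  have qlow_le: "qlow l v \<le> int v" for v unfolding qlow_def by simp
  have col_lt: "col v < ?n" if v: "v < ?N" for v
  proof (cases "v < ?d")
    case True then show ?thesis unfolding col_def by simp
  next
    case False
    have "nat (qlow l v) \<le> v" using qlow_le[of v] by simp
    then show ?thesis unfolding col_def using False v by simp
  qed
  have pt_x: "zl a l ?N ! col v = a (int (l ! v) - int v)" if "v < ?d" for v
    using that zl_nth_x unfolding col_def by simp
  have pt_a: "zl a l ?N ! col v = a (- qlow l v)" if "?d \<le> v" "v < ?N" for v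
  proof -
    have q0: "qlow l v \<ge> 0" using qlow_nonneg[OF lp that] .
    have "nat (qlow l v) \<le> ?N" using qlow_le[of v] that by simp
    then have "zl a l ?N ! col v = a (- int (nat (qlow l v)))"
      unfolding col_def using that zl_nth_a by simp
    then show ?thesis using q0 by simp
  qed
  have col_inj: "inj_on col {..<?N}"
  proof (rule inj_onI)
    fix v v' assume v: "v \<in> {..<?N}" and v': "v' \<in> {..<?N}" and e: "col v = col v'"
    show "v = v'"
    proof (rule ccontr)
      assume ne: "v \<noteq> v'"
      have strict: "col w < col w'" if w: "w < w'" "w' < ?N" for w w'
      proof (cases "w' < ?d")
        case True then show ?thesis unfolding col_def using w by simp
      next
        case False
        show ?thesis
        proof (cases "w < ?d")
          case True then show ?thesis unfolding col_def using False by simp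
        next
          case False2: False
          have "qlow l w < qlow l w'" using qlow_strict[OF lp w] .
          moreover have "qlow l w \<ge> 0" using qlow_nonneg[OF lp] False2 w by simp
          ultimately show ?thesis unfolding col_def using False False2 by simp
        qed
      qed
      have "v < v' \<or> v' < v" using ne by arith
      then show False using strict v v' e by fastforce
    qed
  qed
  have zero_cols: "Rf a l l i u = 0" if i: "i < ?N" and u: "u < ?n" and nu: "u \<notin> col ` {..<?N}" for i u
  proof -
    have ud: "?d \<le> u"
    proof (rule ccontr)
      assume "\<not> ?d \<le> u"
      then have "u < ?d" by simp
      then have "col u = u" "u < ?N" unfolding col_def using dN by auto
      then show False using nu by force
    qed
    obtain q where q: "q \<le> ?N" "u = ?d + q" "zl a l ?N ! u = a (- int q)"
      using a_col[OF ud u] by blast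
    show ?thesis
    proof (cases "i < ?d")
      case True
      have "Pm l i \<ge> 0" using dlen_iff[OF lp, of i] True unfolding Pm_def by simp
      then have "- int q \<in> {- int ?N..min 0 (Pm l i)}" using q(1) by simp
      then have "num a l ?N (Pm l i) (a (- int q)) = 0" by (rule num_zero3)
      then show ?thesis using q(3) by (intro Rf_zero) simp
    next
      case False
      then have id: "?d \<le> i" by simp
      have Pi: "Pm l i = - qlow l i - 1" unfolding Pm_def qlow_def by simp
      show ?thesis
      proof (cases "int q \<le> qlow l i")
        case False
        then have "- int q \<in> {- int ?N..min 0 (Pm l i)}" using q(1) Pi by simp
        then have "num a l ?N (Pm l i) (a (- int q)) = 0" by (rule num_zero3)
        then show ?thesis using q(3) by (intro Rf_zero) simp
      next
        case True
        from maya_cover[OF lp id i _ True]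
        have "(\<exists>t<?d. qt l t = int q) \<or> (\<exists>v. ?d \<le> v \<and> v \<le> i \<and> qlow l v = int q)" by simp
        then show ?thesis
        proof
          assume "\<exists>t<?d. qt l t = int q"
          then obtain t where t: "t < ?d" "qt l t = int q" by blast
          then have "num a l ?N (Pm l i) (a (- qt l t)) = 0" by (intro num_zero1)
          then show ?thesis using q(3) t by (intro Rf_zero) simp
        next
          assume "\<exists>v. ?d \<le> v \<and> v \<le> i \<and> qlow l v = int q"
          then obtain v where v: "?d \<le> v" "v \<le> i" "qlow l v = int q" by blast
          have "col v = u" unfolding col_def using v q(2) by simp
          moreover have "v < ?N" using v i by simp
          ultimately show ?thesis using nu by blast
        qed
      qed
    qed
  qed
  have sum_eq: "(\<Sum>u<?n. Rf a l l i u * Vf a l ?N u j) = (\<Sum>v<?N. Rf a l l i (col v) * Vf a l ?N (col v) j)"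
    if i: "i < ?N" for i j
  proof -
    have sub: "col ` {..<?N} \<subseteq> {..<?n}" using col_lt by auto
    have "(\<Sum>u<?n. Rf a l l i u * Vf a l ?N u j) = (\<Sum>u\<in>col ` {..<?N}. Rf a l l i u * Vf a l ?N u j)"
    proof (rule sum.mono_neutral_right)
      show "\<forall>u\<in>{..<?n} - col ` {..<?N}. Rf a l l i u * Vf a l ?N u j = 0"
        using zero_cols[OF i] by simp
    qed (use sub in auto)
    also have "\<dots> = (\<Sum>v<?N. Rf a l l i (col v) * Vf a l ?N (col v) j)"
      by (rule sum.reindex[OF col_inj, unfolded comp_def])
    finally show ?thesis .
  qed
  have "mat ?N ?N (\<lambda>(i, j). \<Sum>u<?n. Rf a l l i u * Vf a l ?N u j) =
        mat ?N ?N (\<lambda>(i, j). \<Sum>v<?N. Rf a l l i (col v) * Vf a l ?N (col v) j)"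
  proof (rule eq_matI)
    fix i j assume "i < dim_row (mat ?N ?N (\<lambda>(i, j). \<Sum>v<?N. Rf a l l i (col v) * Vf a l ?N (col v) j))"
      "j < dim_col (mat ?N ?N (\<lambda>(i, j). \<Sum>v<?N. Rf a l l i (col v) * Vf a l ?N (col v) j))"
    then have ij: "i < ?N" "j < ?N" by auto
    show "mat ?N ?N (\<lambda>(i, j). \<Sum>u<?n. Rf a l l i u * Vf a l ?N u j) $$ (i, j) =
      mat ?N ?N (\<lambda>(i, j). \<Sum>v<?N. Rf a l l i (col v) * Vf a l ?N (col v) j) $$ (i, j)"
      using ij sum_eq[OF ij(1), of j] by (simp del: sum.lessThan_Suc)
  qed auto
  then have E: "evalL (schurA l a) (xpt a l) (ypt a l) =
      det (mat ?N ?N (\<lambda>(i, v). Rf a l l i (col v))) * det (mat ?N ?N (\<lambda>(v, j). Vf a l ?N (col v) j))"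
    using eval_schurA[OF inj lp lp] det_sum_prod_N by simp
  have V: "det (mat ?N ?N (\<lambda>(v, j). Vf a l ?N (col v) j)) \<noteq> 0"
  proof -
    have inj2: "inj_on (\<lambda>v. zl a l ?N ! col v) {..<?N}"
    proof (rule inj_onI)
      fix v v' assume v: "v \<in> {..<?N}" and v': "v' \<in> {..<?N}" and e: "zl a l ?N ! col v = zl a l ?N ! col v'"
      have "col v = col v'"
        using nth_eq_iff_index_eq[OF zl_distinct[OF inj lp, of ?N]] e col_lt v v' zl_len by auto
      then show "v = v'" using col_inj v v' by (auto dest: inj_onD)
    qed
    have "mat ?N ?N (\<lambda>(v, j). Vf a l ?N (col v) j) = mat ?N ?N (\<lambda>(v, j). psi a j (zl a l ?N ! col v))"
      by (simp add: Vf_def)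
    then show ?thesis using det_psi_nz[OF inj2, of a] by simp
  qed
  have upper: "Rf a l l i (col v) = 0" if iv: "i < v" "v < ?N" for i v
  proof (cases "v < ?d")
    case True
    have i_d: "i < ?d" using iv True by simp
    have "l ! v \<le> l ! i" using part_mono[OF lp, of i v] iv by simp
    then have w1: "int (l ! v) - int v \<le> Pm l i" using iv unfolding Pm_def by simp
    have w2: "1 \<le> int (l ! v) - int v" using xpt_idx[OF lp True] .
    have "num a l ?N (Pm l i) (a (int (l ! v) - int v)) = 0" by (rule num_zero2) (use w1 w2 in simp)
    then show ?thesis using pt_x[OF True] by (intro Rf_zero) simp
  next
    case False
    then have vd: "?d \<le> v" by simp
    have q0: "0 \<le> qlow l v" using qlow_nonneg[OF lp vd iv(2)] .
    have qN: "qlow l v \<le> int ?N" using qlow_le[of v] iv by simp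
    have mem: "- qlow l v \<in> {- int ?N..min 0 (Pm l i)}"
    proof (cases "i < ?d")
      case True
      have "Pm l i \<ge> 0" using dlen_iff[OF lp, of i] True unfolding Pm_def by simp
      then show ?thesis using q0 qN by simp
    next
      case False
      have "qlow l i < qlow l v" using qlow_strict[OF lp iv] .
      moreover have "Pm l i = - qlow l i - 1" unfolding Pm_def qlow_def by simp
      moreover have "qlow l i \<ge> 0" using qlow_nonneg[OF lp] False iv by simp
      ultimately show ?thesis using qN by simp
    qed
    have "num a l ?N (Pm l i) (a (- qlow l v)) = 0" by (rule num_zero3[OF mem])
    then show ?thesis using pt_a[OF vd iv(2)] by (intro Rf_zero) simp
  qed
  have diag: "Rf a l l v (col v) \<noteq> 0" if v: "v < ?N" for v
  proof -
    have fZ: "finite ?Z" using Zset_props[OF inj lp] by simp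
    have dnz: "den ?Z (zl a l ?N ! col v) \<noteq> 0" by (rule den_nz[OF fZ])
    have qtn: "\<And>t. t < ?d \<Longrightarrow> - qt l t \<le> 0" using qt_nonneg[OF lp] by simp
    have "num a l ?N (Pm l v) (zl a l ?N ! col v) \<noteq> 0"
    proof (cases "v < ?d")
      case True
      have w1: "1 \<le> int (l ! v) - int v" using xpt_idx[OF lp True] .
      have P: "Pm l v = int (l ! v) - int v - 1" unfolding Pm_def by simp
      show ?thesis unfolding pt_x[OF True]
        by (rule num_nz[OF inj]) (use w1 P qtn in force)+
    next
      case False
      then have vd: "?d \<le> v" by simp
      have P: "Pm l v = - qlow l v - 1" unfolding Pm_def qlow_def by simp
      have q0: "0 \<le> qlow l v" using qlow_nonneg[OF lp vd v] .
      have dj: "\<And>t. t < ?d \<Longrightarrow> - qlow l v \<noteq> - qt l t" using maya_disj[OF lp vd v] by simp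
      show ?thesis unfolding pt_a[OF vd v]
        by (rule num_nz[OF inj]) (use P q0 dj in auto)
    qed
    then show ?thesis unfolding Rf_def using dnz by simp
  qed
  have R: "det (mat ?N ?N (\<lambda>(i, v). Rf a l l i (col v))) \<noteq> 0"
    using det_lower_tri[of ?N "\<lambda>i v. Rf a l l i (col v)"] upper diag by simp
  show ?thesis using E R V by simp
qed


lemma length_le_sum_pos: "(\<forall>x\<in>set l. 0 < (x::nat)) \<Longrightarrow> length l \<le> sum_list l"
  by (induction l) auto

lemma finite_parts: "finite {l. is_partition l \<and> sum_list l \<le> n}"
proof (rule finite_subset)
  show "{l. is_partition l \<and> sum_list l \<le> n} \<subseteq> {xs. set xs \<subseteq> {..n} \<and> length xs \<le> n}"
  proof
    fix l assume "l \<in> {l. is_partition l \<and> sum_list l \<le> n}"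
    then have lp: "is_partition l" and s: "sum_list l \<le> n" by auto
    have "set l \<subseteq> {..n}" using member_le_sum_list[of _ l] s by fastforce
    moreover have "length l \<le> n" using length_le_sum_pos[of l] lp s unfolding is_partition_def by simp
    ultimately show "l \<in> {xs. set xs \<subseteq> {..n} \<and> length xs \<le> n}" by simp
  qed
  show "finite {xs. set xs \<subseteq> {..n} \<and> length xs \<le> n}"
    by (rule finite_lists_length_le) simp
qed

lemma subdiag_sum:
  assumes "subdiag mu l"
  shows "sum_list mu \<le> sum_list l"
proof -
  have len: "length mu \<le> length l" and le: "\<And>i. i < length mu \<Longrightarrow> mu ! i \<le> l ! i"
    using assms unfolding subdiag_def by auto
  have "sum_list mu = (\<Sum>i<length mu. mu ! i)" by (simp add: sum_list_sum_nth atLeast0LessThan)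
  also have "\<dots> \<le> (\<Sum>i<length mu. l ! i)" by (rule sum_mono) (simp add: le)
  also have "\<dots> \<le> (\<Sum>i<length l. l ! i)" by (rule sum_mono2) (use len in auto)
  also have "\<dots> = sum_list l" by (simp add: sum_list_sum_nth atLeast0LessThan)
  finally show ?thesis .
qed

lemma subdiag_refl: "subdiag l l" by (simp add: subdiag_def)
lemma subdiag_nil: "subdiag [] l" by (simp add: subdiag_def)

lemma schurA_nil: "schurA [] a = 1"
proof -
  have "mat 0 0 (\<lambda>(i, j). hshift (int ([] ! i) - int i + int j) (shiftseq (- int j) a)) = (1\<^sub>m 0 :: symfun mat)"
    by (rule eq_matI) auto
  then show ?thesis unfolding schurA_def by simp
qed

lemma HXY00: "fps_nth (HXY [0] [0]) i = (if i = 0 then 1 else 0)"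
proof -
  have "HXY [0] [0] = geo 0" by (simp add: HXY_def HY_def HX_def linf_def)
  then show ?thesis by (simp add: geo_def)
qed

lemma eval_hshift00:
  assumes "k \<ge> 1"
  shows "evalL (hshift k b) [0] [0] = 0"
proof -
  have "evalL (hshift k b) [0] [0] = (\<Sum>i=1..nat k. (-1) ^ (nat k - i) *
         esym (nat k - i) (map (\<lambda>m. b (int m)) [1..<nat k]) * fps_nth (HXY [0] [0]) i)"
    using assms by (simp add: hshift_def evalL_sum evalL_mult eval_hcomp)
  also have "\<dots> = 0" by (rule sum.neutral) (auto simp: HXY00)
  finally show ?thesis .
qed

lemma eval_schurA00:
  assumes mp: "is_partition mu" and ne: "mu \<noteq> []"
  shows "evalL (schurA mu a) [0] [0] = 0"
proof -
  let ?N = "length mu"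
  have "evalL (schurA mu a) [0] [0] =
     det (map_mat (\<lambda>f. evalL f [0] [0]) (mat ?N ?N
       (\<lambda>(i, j). hshift (int (mu ! i) - int i + int j) (shiftseq (- int j) a))))"
    unfolding schurA_def by (rule evalL_det)
  also have "\<dots> = 0"
  proof (rule det_zero_row'[of _ ?N 0])
    show "0 < ?N" using ne by simp
    fix j assume j: "j < ?N"
    have "mu ! 0 > 0" using part_pos[OF mp] ne by simp
    then show "map_mat (\<lambda>f. evalL f [0] [0]) (mat ?N ?N
       (\<lambda>(i, j). hshift (int (mu ! i) - int i + int j) (shiftseq (- int j) a))) $$ (0, j) = 0"
      using j ne eval_hshift00 by simp
  qed simp
  finally show ?thesis .
qed

theorem theorem12:
  fixes a :: "int \<Rightarrow> complex" and f :: symfun and n :: nat and c :: "nat list \<Rightarrow> complex"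
  assumes "inj a"
    and "\<forall>m\<in>Poly_Mapping.keys f. wdeg m \<le> n"
    and "f = (\<Sum>l\<in>{l. is_partition l \<and> sum_list l \<le> n}. constL (c l) * schurA l a)"
  shows "c [] = evalL f [0] [0] \<and>
    (\<forall>l. is_partition l \<and> l \<noteq> [] \<and> sum_list l \<le> n \<longrightarrow>
       evalL (schurA l a) (xpt a l) (ypt a l) \<noteq> 0 \<and>
       c l = (evalL f (xpt a l) (ypt a l)
              - (\<Sum>mu\<in>{mu. is_partition mu \<and> subdiag mu l \<and> mu \<noteq> l}.
                   c mu * evalL (schurA mu a) (xpt a l) (ypt a l)))
             / evalL (schurA l a) (xpt a l) (ypt a l))"
proof -
  note inj = assms(1)
  let ?Parts = "{l. is_partition l \<and> sum_list l \<le> n}"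
  have fin: "finite ?Parts" by (rule finite_parts)
  have evf: "evalL f xs ys = (\<Sum>l\<in>?Parts. c l * evalL (schurA l a) xs ys)" for xs ys
    unfolding assms(3) by (simp add: evalL_sum evalL_mult)
  have nilP: "[] \<in> ?Parts" by (simp add: is_partition_def)
  have part1: "c [] = evalL f [0] [0]"
  proof -
    have "evalL f [0] [0] = c [] * evalL (schurA [] a) [0] [0] +
        (\<Sum>l\<in>?Parts - {[]}. c l * evalL (schurA l a) [0] [0])"
      unfolding evf by (rule sum.remove[OF fin nilP])
    also have "(\<Sum>l\<in>?Parts - {[]}. c l * evalL (schurA l a) [0] [0]) = 0"
      by (rule sum.neutral) (auto simp: eval_schurA00)
    finally show ?thesis by (simp add: schurA_nil)
  qed
  have part2: "evalL (schurA l a) (xpt a l) (ypt a l) \<noteq> 0 \<and>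
       c l = (evalL f (xpt a l) (ypt a l)
              - (\<Sum>mu\<in>{mu. is_partition mu \<and> subdiag mu l \<and> mu \<noteq> l}.
                   c mu * evalL (schurA mu a) (xpt a l) (ypt a l)))
             / evalL (schurA l a) (xpt a l) (ypt a l)"
    if l: "is_partition l" "l \<noteq> []" "sum_list l \<le> n" for l
  proof -
    let ?ev = "\<lambda>mu. evalL (schurA mu a) (xpt a l) (ypt a l)"
    let ?Sub = "{mu. is_partition mu \<and> subdiag mu l \<and> mu \<noteq> l}"
    have nz: "?ev l \<noteq> 0" by (rule nonvanish[OF inj l(1)])
    have lP: "l \<in> ?Parts" using l by simp
    have SubP: "?Sub \<subseteq> ?Parts - {l}" using subdiag_sum l(3) by fastforce
    have finSub: "finite ?Sub" using finite_subset[OF SubP] fin by auto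
    have "evalL f (xpt a l) (ypt a l) = c l * ?ev l + (\<Sum>mu\<in>?Parts - {l}. c mu * ?ev mu)"
      unfolding evf by (rule sum.remove[OF fin lP])
    also have "(\<Sum>mu\<in>?Parts - {l}. c mu * ?ev mu) = (\<Sum>mu\<in>?Sub. c mu * ?ev mu)"
    proof (rule sum.mono_neutral_right[OF _ SubP])
      show "finite (?Parts - {l})" using fin by simp
      show "\<forall>mu\<in>?Parts - {l} - ?Sub. c mu * ?ev mu = 0"
        using vanish[OF inj l(1)] by auto
    qed
    finally have "evalL f (xpt a l) (ypt a l) = c l * ?ev l + (\<Sum>mu\<in>?Sub. c mu * ?ev mu)" .
    then have "c l = (evalL f (xpt a l) (ypt a l) - (\<Sum>mu\<in>?Sub. c mu * ?ev mu)) / ?ev l"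
      using nz by (simp add: field_simps)
    then show ?thesis using nz by simp
  qed
  show ?thesis using part1 part2 by blast
qed


end
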